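(* Let $G$ be a $(P_5, C_4)$-free graph and let $\ell \ge \chi(G)+1$ be an integer. Then $\mathcal{R}_\ell(G)$ is connected.
   Context: All graphs are finite and simple. A $k$-colouring of $G$ is a map $\alpha: V(G)\to\{1,\dots,k\}$ with $\alpha(u)\neq\alpha(v)$ for every edge $uv$; $\chi(G)$ is the chromatic number. The reconfiguration graph $\mathcal{R}_k(G)$ has the $k$-colourings of $G$ as vertices, two being adjacent if they differ on exactly one vertex. A graph is $(H_1,H_2)$-free if it has no induced subgraph isomorphic to $H_1$ or $H_2$; $P_5$ is the path on 5 vertices and $C_4$ the 4-cycle. *)

theory Defs
  imports Main "HOL-Library.FuncSet"
begin

definition simple_graph :: "'a set \<Rightarrow> 'a set set \<Rightarrow> bool" where
  "simple_graph V E \<longleftrightarrow> finite V \<and> (\<forall>e\<in>E. e \<subseteq> V \<and> card e = 2)"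

definition has_induced :: "'a set \<Rightarrow> 'a set set \<Rightarrow> nat \<Rightarrow> (nat \<Rightarrow> nat \<Rightarrow> bool) \<Rightarrow> bool" where
  "has_induced V E n H \<longleftrightarrow>
     (\<exists>f. inj_on f {0..<n} \<and> f ` {0..<n} \<subseteq> V \<and>
          (\<forall>i\<in>{0..<n}. \<forall>j\<in>{0..<n}. {f i, f j} \<in> E \<longleftrightarrow> H i j))"

definition P5_adj :: "nat \<Rightarrow> nat \<Rightarrow> bool" where
  "P5_adj i j \<longleftrightarrow> i + 1 = j \<or> j + 1 = i"

definition C4_adj :: "nat \<Rightarrow> nat \<Rightarrow> bool" where
  "C4_adj i j \<longleftrightarrow> (i + 1) mod 4 = j \<or> (j + 1) mod 4 = i"

definition P5_C4_free :: "'a set \<Rightarrow> 'a set set \<Rightarrow> bool" where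
  "P5_C4_free V E \<longleftrightarrow> \<not> has_induced V E 5 P5_adj \<and> \<not> has_induced V E 4 C4_adj"

definition colourings :: "'a set \<Rightarrow> 'a set set \<Rightarrow> nat \<Rightarrow> ('a \<Rightarrow> nat) set" where
  "colourings V E k = {\<alpha> \<in> V \<rightarrow>\<^sub>E {1..k}. \<forall>u\<in>V. \<forall>v\<in>V. {u, v} \<in> E \<longrightarrow> \<alpha> u \<noteq> \<alpha> v}"

definition chromatic_number :: "'a set \<Rightarrow> 'a set set \<Rightarrow> nat" where
  "chromatic_number V E = (LEAST k. colourings V E k \<noteq> {})"

definition recolour_adj :: "'a set \<Rightarrow> ('a \<Rightarrow> nat) \<Rightarrow> ('a \<Rightarrow> nat) \<Rightarrow> bool" where
  "recolour_adj V \<alpha> \<beta> \<longleftrightarrow> card {v \<in> V. \<alpha> v \<noteq> \<beta> v} = 1"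

definition reconf_connected :: "'a set \<Rightarrow> 'a set set \<Rightarrow> nat \<Rightarrow> bool" where
  "reconf_connected V E k \<longleftrightarrow>
     (\<forall>\<alpha>\<in>colourings V E k. \<forall>\<beta>\<in>colourings V E k.
        \<exists>xs. xs \<noteq> [] \<and> hd xs = \<alpha> \<and> last xs = \<beta> \<and> set xs \<subseteq> colourings V E k \<and>
             (\<forall>i < length xs - 1. recolour_adj V (xs ! i) (xs ! Suc i)))"

end

theory Submission
  imports Defs
begin

definition col :: "'a set \<Rightarrow> 'a set set \<Rightarrow> nat set \<Rightarrow> ('a \<Rightarrow> nat) \<Rightarrow> bool" where
  "col V E L \<alpha> \<longleftrightarrow> \<alpha> \<in> V \<rightarrow>\<^sub>E L \<and> (\<forall>u\<in>V. \<forall>v\<in>V. {u, v} \<in> E \<longrightarrow> \<alpha> u \<noteq> \<alpha> v)"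

definition step :: "'a set \<Rightarrow> 'a set set \<Rightarrow> nat set \<Rightarrow> ('a \<Rightarrow> nat) \<Rightarrow> ('a \<Rightarrow> nat) \<Rightarrow> bool" where
  "step V E L \<alpha> \<beta> \<longleftrightarrow> col V E L \<alpha> \<and> col V E L \<beta> \<and> (\<exists>u. \<forall>v. v \<noteq> u \<longrightarrow> \<alpha> v = \<beta> v)"

abbreviation reach where "reach V E L \<equiv> (step V E L)\<^sup>*\<^sup>*"

definition conn :: "'a set \<Rightarrow> 'a set set \<Rightarrow> nat set \<Rightarrow> bool" where
  "conn V E L \<longleftrightarrow> (\<forall>\<alpha> \<beta>. col V E L \<alpha> \<longrightarrow> col V E L \<beta> \<longrightarrow> reach V E L \<alpha> \<beta>)"

definition loopless :: "'a set set \<Rightarrow> bool" where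
  "loopless E \<longleftrightarrow> (\<forall>v. {v} \<notin> E)"

lemma colourings_col: "colourings V E k = Collect (col V E {1..k})"
  unfolding colourings_def col_def by auto

lemma col_ext: "col V E L \<alpha> \<Longrightarrow> v \<notin> V \<Longrightarrow> \<alpha> v = undefined"
  unfolding col_def by (auto simp: PiE_def extensional_def)

lemma col_in: "col V E L \<alpha> \<Longrightarrow> v \<in> V \<Longrightarrow> \<alpha> v \<in> L"
  unfolding col_def by auto

lemma col_adj: "col V E L \<alpha> \<Longrightarrow> u \<in> V \<Longrightarrow> v \<in> V \<Longrightarrow> {u,v} \<in> E \<Longrightarrow> \<alpha> u \<noteq> \<alpha> v"
  unfolding col_def by auto

lemma colI:
  assumes "\<And>v. v \<in> V \<Longrightarrow> \<alpha> v \<in> L" "\<And>v. v \<notin> V \<Longrightarrow> \<alpha> v = undefined"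
    "\<And>u v. u \<in> V \<Longrightarrow> v \<in> V \<Longrightarrow> {u,v} \<in> E \<Longrightarrow> \<alpha> u \<noteq> \<alpha> v"
  shows "col V E L \<alpha>"
  using assms unfolding col_def by (auto simp: PiE_def extensional_def)

lemma col_eqI: "col V E L \<alpha> \<Longrightarrow> col V E L' \<beta> \<Longrightarrow> (\<And>v. v \<in> V \<Longrightarrow> \<alpha> v = \<beta> v) \<Longrightarrow> \<alpha> = \<beta>"
  by (rule ext) (metis col_ext)

lemma col_upd:
  assumes "col V E L \<alpha>" "v \<in> V" "c \<in> L" "\<And>w. w \<in> V \<Longrightarrow> {v,w} \<in> E \<Longrightarrow> \<alpha> w \<noteq> c"
  shows "col V E L (\<alpha>(v := c))"
proof (rule colI)
  fix x assume "x \<in> V" then show "(\<alpha>(v := c)) x \<in> L" using assms(1,3) col_in by auto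
next
  fix x assume "x \<notin> V" then show "(\<alpha>(v := c)) x = undefined" using assms(1,2) col_ext by auto
next
  fix x y assume xy: "x \<in> V" "y \<in> V" "{x,y} \<in> E"
  show "(\<alpha>(v := c)) x \<noteq> (\<alpha>(v := c)) y"
  proof (cases "x = v")
    case True
    then show ?thesis using xy assms(4)[of y] col_adj[OF assms(1), of v v] by (cases "y = v") auto
  next
    case False
    show ?thesis
    proof (cases "y = v")
      case True
      have "{v,x} \<in> E" using xy True by (simp add: insert_commute)
      then show ?thesis using assms(4)[of x] xy True False by simp
    next
      case F2: False
      then show ?thesis using xy False col_adj[OF assms(1)] by simp
    qed
  qed
qed

lemma step_upd:
  assumes "col V E L \<alpha>" "v \<in> V" "c \<in> L" "\<And>w. w \<in> V \<Longrightarrow> {v,w} \<in> E \<Longrightarrow> \<alpha> w \<noteq> c"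
  shows "step V E L \<alpha> (\<alpha>(v := c))"
  using col_upd[OF assms] assms(1) unfolding step_def by auto

lemma reach_upd:
  assumes "col V E L \<alpha>" "v \<in> V" "c \<in> L" "\<And>w. w \<in> V \<Longrightarrow> {v,w} \<in> E \<Longrightarrow> \<alpha> w \<noteq> c"
  shows "reach V E L \<alpha> (\<alpha>(v := c))"
  using step_upd[OF assms] by auto

lemma step_sym: "step V E L \<alpha> \<beta> \<Longrightarrow> step V E L \<beta> \<alpha>"
  unfolding step_def by metis

lemma reach_sym: "reach V E L \<alpha> \<beta> \<Longrightarrow> reach V E L \<beta> \<alpha>"
proof (induction rule: rtranclp_induct)
  case base then show ?case by simp
next
  case (step y z)
  then show ?case using step_sym
    by (metis converse_rtranclp_into_rtranclp)
qed

lemma reach_trans: "reach V E L \<alpha> \<beta> \<Longrightarrow> reach V E L \<beta> \<gamma> \<Longrightarrow> reach V E L \<alpha> \<gamma>"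
  by auto

lemma reach_col: "reach V E L \<alpha> \<beta> \<Longrightarrow> col V E L \<alpha> \<Longrightarrow> col V E L \<beta>"
  by (induction rule: rtranclp_induct) (auto simp: step_def)

lemma reach_map:
  assumes "\<And>\<sigma> \<sigma>'. step V' E L' \<sigma> \<sigma>' \<Longrightarrow> step V E L (f \<sigma>) (f \<sigma>')"
    and "reach V' E L' \<sigma> \<sigma>'"
  shows "reach V E L (f \<sigma>) (f \<sigma>')"
  using assms(2)
proof (induction rule: rtranclp_induct)
  case base then show ?case by simp
next
  case (step y z)
  then show ?case using assms(1) by (meson rtranclp.rtrancl_into_rtrancl)
qed

lemma col_restrict: "col V E L \<alpha> \<Longrightarrow> B \<subseteq> V \<Longrightarrow> col B E L (restrict \<alpha> B)"
  unfolding col_def by auto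

lemma col_mono_L: "col V E L \<alpha> \<Longrightarrow> \<alpha> ` V \<subseteq> L' \<Longrightarrow> col V E L' \<alpha>"
  unfolding col_def by (auto simp: PiE_def Pi_def)

lemma col_exists_any:
  assumes "finite V" "loopless E"
  shows "\<exists>\<alpha>. col V E {1..card V} \<alpha>"
proof -
  obtain h where h: "bij_betw h V {0..<card V}" using ex_bij_betw_finite_nat[OF assms(1)] by blast
  let ?\<alpha> = "restrict (\<lambda>v. h v + 1) V"
  have "col V E {1..card V} ?\<alpha>"
  proof (rule colI)
    fix v assume v: "v \<in> V"
    then have "h v \<in> {0..<card V}" using h by (auto simp: bij_betw_def)
    then show "?\<alpha> v \<in> {1..card V}" using v by auto
  next
    fix u v assume "u \<in> V" "v \<in> V" "{u,v} \<in> E"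
    then have "u \<noteq> v" using assms(2) unfolding loopless_def by auto
    then show "?\<alpha> u \<noteq> ?\<alpha> v" using h \<open>u \<in> V\<close> \<open>v \<in> V\<close> by (auto simp: bij_betw_def inj_on_def)
  qed auto
  then show ?thesis by blast
qed

lemma chi_col:
  assumes "finite V" "loopless E"
  shows "\<exists>\<alpha>. col V E {1..chromatic_number V E} \<alpha>"
proof -
  have "colourings V E (card V) \<noteq> {}" using col_exists_any[OF assms] by (auto simp: colourings_col)
  then have "colourings V E (chromatic_number V E) \<noteq> {}"
    unfolding chromatic_number_def by (rule LeastI)
  then show ?thesis by (auto simp: colourings_col)
qed

lemma chi_le:
  assumes "col V E L \<alpha>" "finite L"
  shows "chromatic_number V E \<le> card L"
proof -
  obtain g where g: "bij_betw g L {0..<card L}" using ex_bij_betw_finite_nat[OF assms(2)] by blast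
  let ?\<beta> = "restrict (\<lambda>v. g (\<alpha> v) + 1) V"
  have "col V E {1..card L} ?\<beta>"
  proof (rule colI)
    fix v assume v: "v \<in> V"
    then have "g (\<alpha> v) \<in> {0..<card L}" using g col_in[OF assms(1)] by (auto simp: bij_betw_def)
    then show "?\<beta> v \<in> {1..card L}" using v by auto
  next
    fix u v assume "u \<in> V" "v \<in> V" "{u,v} \<in> E"
    then have "\<alpha> u \<noteq> \<alpha> v" using col_adj[OF assms(1)] by auto
    then show "?\<beta> u \<noteq> ?\<beta> v" using g \<open>u \<in> V\<close> \<open>v \<in> V\<close> col_in[OF assms(1)]
      by (auto simp: bij_betw_def inj_on_def)
  qed auto
  then have "colourings V E (card L) \<noteq> {}" by (auto simp: colourings_col)
  then show ?thesis unfolding chromatic_number_def by (rule Least_le)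
qed

lemma col_exists:
  assumes "finite V" "loopless E" "finite L" "chromatic_number V E \<le> card L"
  shows "\<exists>\<alpha>. col V E L \<alpha>"
proof -
  obtain \<alpha> where a: "col V E {1..chromatic_number V E} \<alpha>" using chi_col[OF assms(1,2)] by blast
  obtain g where g: "g ` {1..chromatic_number V E} \<subseteq> L" "inj_on g {1..chromatic_number V E}"
    using card_le_inj[of "{1..chromatic_number V E}" L] assms(3,4) by auto
  let ?\<beta> = "restrict (\<lambda>v. g (\<alpha> v)) V"
  have "col V E L ?\<beta>"
  proof (rule colI)
    fix v assume "v \<in> V" then show "?\<beta> v \<in> L" using g col_in[OF a] by auto
  next
    fix u v assume "u \<in> V" "v \<in> V" "{u,v} \<in> E"
    then have "\<alpha> u \<noteq> \<alpha> v" using col_adj[OF a] by auto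
    then show "?\<beta> u \<noteq> ?\<beta> v" using g \<open>u \<in> V\<close> \<open>v \<in> V\<close> col_in[OF a]
      by (auto simp: inj_on_def)
  qed auto
  then show ?thesis by blast
qed

lemma chi_mono:
  assumes "finite V" "loopless E" "B \<subseteq> V"
  shows "chromatic_number B E \<le> chromatic_number V E"
proof -
  obtain \<alpha> where a: "col V E {1..chromatic_number V E} \<alpha>" using chi_col[OF assms(1,2)] by blast
  show ?thesis using chi_le[OF col_restrict[OF a assms(3)]] by simp
qed

lemma clique_card_le:
  assumes "col V E L \<alpha>" "K \<subseteq> V" "\<And>x y. x \<in> K \<Longrightarrow> y \<in> K \<Longrightarrow> x \<noteq> y \<Longrightarrow> {x,y} \<in> E" "finite L"
  shows "card K \<le> card L"
proof -
  have "inj_on \<alpha> K"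
  proof (rule inj_onI)
    fix x y assume "x \<in> K" "y \<in> K" "\<alpha> x = \<alpha> y"
    then show "x = y" using assms(2,3) col_adj[OF assms(1), of x y] by blast
  qed
  moreover have "\<alpha> ` K \<subseteq> L" using assms(2) col_in[OF assms(1)] by auto
  ultimately show ?thesis using assms(4) card_inj_on_le by blast
qed

lemma clique_card_chi:
  assumes "finite V" "loopless E" "K \<subseteq> V" "\<And>x y. x \<in> K \<Longrightarrow> y \<in> K \<Longrightarrow> x \<noteq> y \<Longrightarrow> {x,y} \<in> E"
  shows "card K \<le> chromatic_number V E"
proof -
  obtain \<alpha> where a: "col V E {1..chromatic_number V E} \<alpha>" using chi_col[OF assms(1,2)] by blast
  show ?thesis using clique_card_le[OF a assms(3,4)] by simp
qed

lemma has_induced_mono: "has_induced B E n H \<Longrightarrow> B \<subseteq> V \<Longrightarrow> has_induced V E n H"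
  unfolding has_induced_def by (meson order_trans)

lemma free_mono: "P5_C4_free V E \<Longrightarrow> B \<subseteq> V \<Longrightarrow> P5_C4_free B E"
  unfolding P5_C4_free_def using has_induced_mono[of B E _ _ V] by blast

lemma P5_ind:
  assumes "loopless E" "a \<in> V" "b \<in> V" "c \<in> V" "d \<in> V" "e \<in> V"
    "{a,b} \<in> E" "{b,c} \<in> E" "{c,d} \<in> E" "{d,e} \<in> E"
    "{a,c} \<notin> E" "{a,d} \<notin> E" "{a,e} \<notin> E" "{b,d} \<notin> E" "{b,e} \<notin> E" "{c,e} \<notin> E"
  shows "has_induced V E 5 P5_adj"
proof -
  have lp: "\<And>x. {x} \<notin> E" using assms(1) unfolding loopless_def by auto
  have dist: "a \<noteq> b" "a \<noteq> c" "a \<noteq> d" "a \<noteq> e" "b \<noteq> c" "b \<noteq> d" "b \<noteq> e" "c \<noteq> d" "c \<noteq> e" "d \<noteq> e"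
    using assms lp by (auto simp: insert_commute)
  let ?f = "\<lambda>i. [a,b,c,d,e] ! i"
  have ex: "{0..<5::nat} = {0,1,2,3,4}" by auto
  show ?thesis unfolding has_induced_def
    apply (rule exI[of _ ?f])
    using assms dist lp unfolding ex P5_adj_def
    by (auto simp: inj_on_def insert_commute)
qed

lemma C4_ind:
  assumes "a \<in> V" "b \<in> V" "c \<in> V" "d \<in> V" "a \<noteq> c" "b \<noteq> d" "loopless E"
    "{a,b} \<in> E" "{b,c} \<in> E" "{c,d} \<in> E" "{d,a} \<in> E"
    "{a,c} \<notin> E" "{b,d} \<notin> E"
  shows "has_induced V E 4 C4_adj"
proof -
  have lp: "\<And>x. {x} \<notin> E" using assms(7) unfolding loopless_def by auto
  have dist: "a \<noteq> b" "a \<noteq> d" "b \<noteq> c" "c \<noteq> d"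
    using assms lp by (auto simp: insert_commute)
  let ?f = "\<lambda>i. [a,b,c,d] ! i"
  have ex: "{0..<4::nat} = {0,1,2,3}" by auto
  show ?thesis unfolding has_induced_def
    apply (rule exI[of _ ?f])
    using assms dist lp unfolding ex C4_adj_def
    by (auto simp: inj_on_def insert_commute)
qed

definition C5_adj :: "nat \<Rightarrow> nat \<Rightarrow> bool" where
  "C5_adj i j \<longleftrightarrow> (i + 1) mod 5 = j \<or> (j + 1) mod 5 = i"

lemma C5_ind:
  assumes "loopless E" "a \<in> V" "b \<in> V" "c \<in> V" "d \<in> V" "e \<in> V"
    "{a,b} \<in> E" "{b,c} \<in> E" "{c,d} \<in> E" "{d,e} \<in> E" "{e,a} \<in> E"
    "{a,c} \<notin> E" "{a,d} \<notin> E" "{b,d} \<notin> E" "{b,e} \<notin> E" "{c,e} \<notin> E"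
  shows "has_induced V E 5 C5_adj"
proof -
  have lp: "\<And>x. {x} \<notin> E" using assms(1) unfolding loopless_def by auto
  have dist: "a \<noteq> b" "a \<noteq> c" "a \<noteq> d" "a \<noteq> e" "b \<noteq> c" "b \<noteq> d" "b \<noteq> e" "c \<noteq> d" "c \<noteq> e" "d \<noteq> e"
    using assms lp by (auto simp: insert_commute)
  let ?f = "\<lambda>i. [a,b,c,d,e] ! i"
  have ex: "{0..<5::nat} = {0,1,2,3,4}" by auto
  show ?thesis unfolding has_induced_def
    apply (rule exI[of _ ?f])
    using assms dist lp unfolding ex C5_adj_def
    by (auto simp: inj_on_def insert_commute)
qed

lemma all5: "(\<forall>k<(5::nat). P k) = (P 0 \<and> P 1 \<and> P 2 \<and> P 3 \<and> P 4)"
  by (auto simp: numeral_eq_Suc less_Suc_eq)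

lemma ex5: "(\<exists>k<(5::nat). P k) = (P 0 \<or> P 1 \<or> P 2 \<or> P 3 \<or> P 4)"
  by (auto simp: numeral_eq_Suc less_Suc_eq)

lemma mod5_add_cancel: "((a + i) mod 5 = (b + i) mod (5::nat)) = (a mod 5 = b mod 5)"
proof
  assume h: "(a + i) mod 5 = (b + i) mod 5"
  have "(a + i + 4*i) mod 5 = (b + i + 4*i) mod 5" using mod_add_cong[OF h refl] .
  then have "(a + i*5) mod 5 = (b + i*5) mod 5" by (simp add: algebra_simps)
  then show "a mod 5 = b mod 5" by simp
next
  assume "a mod 5 = b mod 5" then show "(a + i) mod 5 = (b + i) mod 5" using mod_add_cong by blast
qed

definition cyc :: "'a set \<Rightarrow> 'a set set \<Rightarrow> (nat \<Rightarrow> 'a) \<Rightarrow> bool" where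
  "cyc V E c \<longleftrightarrow> (\<forall>k. c k \<in> V) \<and>
     (\<forall>k l. ({c k, c l} \<in> E) = ((k+1) mod 5 = l mod 5 \<or> (l+1) mod 5 = k mod 5)) \<and>
     (\<forall>k l. (c k = c l) = (k mod 5 = l mod 5))"

lemma cyc_V: "cyc V E c \<Longrightarrow> c k \<in> V" unfolding cyc_def by auto
lemma cyc_adj: "cyc V E c \<Longrightarrow> ({c k, c l} \<in> E) = ((k+1) mod 5 = l mod 5 \<or> (l+1) mod 5 = k mod 5)"
  unfolding cyc_def by auto
lemma cyc_eq: "cyc V E c \<Longrightarrow> (c k = c l) = (k mod 5 = l mod 5)"
  unfolding cyc_def by auto
lemma cyc_wrap: "cyc V E c \<Longrightarrow> c 5 = c 0 \<and> c 6 = c 1 \<and> c 7 = c 2 \<and> c 8 = c 3"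
  using cyc_eq[of V E c] by auto

lemma cyc_rot: assumes "cyc V E c" shows "cyc V E (\<lambda>k. c (k + i))"
proof -
  have "((k + i + 1) mod 5 = (l + i) mod 5) = ((k+1) mod 5 = l mod 5)" for k l
    using mod5_add_cancel[of "k+1" i l] by (simp add: algebra_simps)
  then show ?thesis using assms unfolding cyc_def
    by (auto simp: mod5_add_cancel)
qed

lemma has_C5_cyc:
  assumes "has_induced V E 5 C5_adj"
  shows "\<exists>c. cyc V E c"
proof -
  obtain f where f: "inj_on f {0..<5}" "f ` {0..<5} \<subseteq> V"
    "\<forall>i\<in>{0..<5}. \<forall>j\<in>{0..<5}. ({f i, f j} \<in> E) = C5_adj i j"
    using assms unfolding has_induced_def by blast
  let ?c = "\<lambda>k. f (k mod 5)"
  have "cyc V E ?c" unfolding cyc_def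
  proof (intro conjI allI)
    fix k show "?c k \<in> V" using f(2) by auto
  next
    fix k l
    have "({?c k, ?c l} \<in> E) = C5_adj (k mod 5) (l mod 5)" using f(3) by auto
    also have "\<dots> = ((k+1) mod 5 = l mod 5 \<or> (l+1) mod 5 = k mod 5)"
      unfolding C5_adj_def by (simp add: mod_Suc_eq)
    finally show "({?c k, ?c l} \<in> E) = ((k+1) mod 5 = l mod 5 \<or> (l+1) mod 5 = k mod 5)" .
  next
    fix k l show "(?c k = ?c l) = (k mod 5 = l mod 5)" using f(1) unfolding inj_on_def by auto
  qed
  then show ?thesis by blast
qed

definition pat :: "'a set set \<Rightarrow> (nat \<Rightarrow> 'a) \<Rightarrow> 'a \<Rightarrow> nat \<Rightarrow> bool" where
  "pat E c v i \<longleftrightarrow> (v = c i \<or> {v, c i} \<in> E) \<and> {v, c (i+4)} \<in> E \<and> {v, c (i+1)} \<in> E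
     \<and> {v, c (i+2)} \<notin> E \<and> {v, c (i+3)} \<notin> E"

lemma pat0: "pat E c v 0 = ((v = c 0 \<or> {v, c 0} \<in> E) \<and> {v, c 4} \<in> E \<and> {v, c 1} \<in> E
     \<and> {v, c 2} \<notin> E \<and> {v, c 3} \<notin> E)"
  unfolding pat_def by (simp add: eval_nat_numeral)

lemma pat1: "pat E c v 1 = ((v = c 1 \<or> {v, c 1} \<in> E) \<and> {v, c 5} \<in> E \<and> {v, c 2} \<in> E
     \<and> {v, c 3} \<notin> E \<and> {v, c 4} \<notin> E)"
  unfolding pat_def by (simp add: eval_nat_numeral)

lemma pat2: "pat E c v 2 = ((v = c 2 \<or> {v, c 2} \<in> E) \<and> {v, c 6} \<in> E \<and> {v, c 3} \<in> E
     \<and> {v, c 4} \<notin> E \<and> {v, c 5} \<notin> E)"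
  unfolding pat_def by (simp add: eval_nat_numeral)

lemma pat3: "pat E c v 3 = ((v = c 3 \<or> {v, c 3} \<in> E) \<and> {v, c 7} \<in> E \<and> {v, c 4} \<in> E
     \<and> {v, c 5} \<notin> E \<and> {v, c 6} \<notin> E)"
  unfolding pat_def by (simp add: eval_nat_numeral)

lemma pat4: "pat E c v 4 = ((v = c 4 \<or> {v, c 4} \<in> E) \<and> {v, c 8} \<in> E \<and> {v, c 5} \<in> E
     \<and> {v, c 6} \<notin> E \<and> {v, c 7} \<notin> E)"
  unfolding pat_def by (simp add: eval_nat_numeral)

definition near :: "nat \<Rightarrow> nat \<Rightarrow> bool" where
  "near i j \<longleftrightarrow> i = j \<or> (i+1) mod 5 = j \<or> (j+1) mod 5 = i"

lemma pat_rot: "pat E c v i = pat E (\<lambda>k. c (k + i)) v 0"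
  unfolding pat_def by (simp add: add.commute)

lemma cyc_modk: "cyc V E c \<Longrightarrow> c k = c (k mod 5)"
  using cyc_eq[of V E c k "k mod 5"] by simp

lemma pat_mod: assumes "cyc V E c" "m mod 5 = n mod 5" shows "pat E c v m = pat E c v n"
proof -
  have "c (m + t) = c (n + t)" for t
    using assms cyc_eq[OF assms(1)] mod_add_cong by blast
  then show ?thesis unfolding pat_def by (metis add_0_right)
qed

lemma pat_rot_gen: assumes "cyc V E c" "i < 5" "j < 5"
  shows "pat E c v j = pat E (\<lambda>k. c (k + i)) v ((j + 5 - i) mod 5)"
proof -
  have "pat E (\<lambda>k. c (k + i)) v m = pat E c v (m + i)" for m
    unfolding pat_def by (simp add: add.assoc add.commute add.left_commute)
  moreover have "pat E c v ((j + 5 - i) mod 5 + i) = pat E c v j"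
  proof (rule pat_mod[OF assms(1)])
    have "((j + 5 - i) mod 5 + i) mod 5 = (j + 5 - i + i) mod 5" by (rule mod_add_left_eq)
    also have "j + 5 - i + i = j + 5" using assms(2) by simp
    finally show "((j + 5 - i) mod 5 + i) mod 5 = j mod 5" by simp
  qed
  ultimately show ?thesis by simp
qed

lemma near_rot: assumes "i < 5" "j < 5" shows "near 0 ((j + 5 - i) mod 5) = near i j"
proof -
  have "i = 0 \<or> i = 1 \<or> i = 2 \<or> i = 3 \<or> i = 4" using assms(1) by linarith
  moreover have "j = 0 \<or> j = 1 \<or> j = 2 \<or> j = 3 \<or> j = 4" using assms(2) by linarith
  ultimately show ?thesis unfolding near_def by (elim disjE) simp_all
qed

context
  fixes V :: "'a set" and E :: "'a set set" and c :: "nat \<Rightarrow> 'a"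
  assumes cy: "cyc V E c" and lp: "loopless E" and fr: "P5_C4_free V E"
begin

lemma lp': "{x} \<notin> E" using lp unfolding loopless_def by auto

lemmas cs = cyc_adj[OF cy] cyc_eq[OF cy] cyc_V[OF cy] cyc_wrap[OF cy]

lemma noC4: "a \<in> V \<Longrightarrow> b \<in> V \<Longrightarrow> c' \<in> V \<Longrightarrow> d \<in> V \<Longrightarrow> a \<noteq> c' \<Longrightarrow> b \<noteq> d \<Longrightarrow>
    {a,b} \<in> E \<Longrightarrow> {b,c'} \<in> E \<Longrightarrow> {c',d} \<in> E \<Longrightarrow> {d,a} \<in> E \<Longrightarrow> {a,c'} \<notin> E \<Longrightarrow> {b,d} \<notin> E \<Longrightarrow> False"
  using C4_ind[OF _ _ _ _ _ _ lp] fr unfolding P5_C4_free_def by blast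

lemma noP5: "a \<in> V \<Longrightarrow> b \<in> V \<Longrightarrow> c' \<in> V \<Longrightarrow> d \<in> V \<Longrightarrow> e \<in> V \<Longrightarrow>
    {a,b} \<in> E \<Longrightarrow> {b,c'} \<in> E \<Longrightarrow> {c',d} \<in> E \<Longrightarrow> {d,e} \<in> E \<Longrightarrow>
    {a,c'} \<notin> E \<Longrightarrow> {a,d} \<notin> E \<Longrightarrow> {a,e} \<notin> E \<Longrightarrow> {b,d} \<notin> E \<Longrightarrow> {b,e} \<notin> E \<Longrightarrow> {c',e} \<notin> E \<Longrightarrow> False"
  using P5_ind[OF lp] fr unfolding P5_C4_free_def by blast

lemma esym: "{a,b} \<in> E \<Longrightarrow> {b,a} \<in> E" by (simp add: insert_commute)
lemma nesym: "{a,b} \<notin> E \<Longrightarrow> {b,a} \<notin> E" by (simp add: insert_commute)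

lemma LL1: assumes "v \<in> V" "\<forall>k. v \<noteq> c k" "{v, c 0} \<in> E" "{v, c 2} \<in> E" shows "{v, c 1} \<in> E"
proof (rule ccontr)
  assume "{v, c 1} \<notin> E"
  then show False
    using noC4[of v "c 0" "c 1" "c 2"] assms esym[OF assms(4)] by (simp add: cs)
qed

lemma LL2: assumes "v \<in> V" "{v, c 0} \<in> E" "{v, c 1} \<notin> E" "{v, c 2} \<notin> E" "{v, c 3} \<notin> E" shows False
  using noP5[of v "c 0" "c 1" "c 2" "c 3"] assms by (simp add: cs)

lemma LL4: assumes "pat E c b 0" "b \<in> V" "y \<in> V" "\<forall>k. {y, c k} \<in> E" "b \<noteq> y"
  shows "{b, y} \<in> E"
proof (rule ccontr)
  assume h: "{b, y} \<notin> E"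
  have p: "{b, c 1} \<in> E" "{b, c 4} \<in> E" using assms(1) unfolding pat0 by simp_all
  have y: "{y, c 1} \<in> E" "{y, c 4} \<in> E" using assms(4) by auto
  show False using noC4[of b "c 1" y "c 4"] assms(2,3,5) h p esym[OF y(1)] esym[OF p(2)] y(2) by (simp add: cs)
qed

lemma LL5: assumes "pat E c b 0" "b \<in> V" "z \<in> V" "\<forall>k. {z, c k} \<notin> E" "{b, z} \<in> E"
  shows False
proof -
  have p: "{b, c 1} \<in> E" "{b, c 2} \<notin> E" "{b, c 3} \<notin> E" using assms(1) unfolding pat0 by simp_all
  have z: "{z, c 1} \<notin> E" "{z, c 2} \<notin> E" "{z, c 3} \<notin> E" using assms(4) by auto
  show False using noP5[of z b "c 1" "c 2" "c 3"] assms(2,3) esym[OF assms(5)] p z by (simp add: cs)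
qed

lemma LL6: assumes "pat E c b 0" "pat E c b' j" "j < 5" "b \<noteq> b'" "b \<in> V" "b' \<in> V"
  shows "({b, b'} \<in> E) = near 0 j"
proof -
  have p: "{b, c 1} \<in> E" "{b, c 4} \<in> E" "{b, c 2} \<notin> E" "{b, c 3} \<notin> E"
    using assms(1) unfolding pat0 by simp_all
  have "j = 0 \<or> j = 1 \<or> j = 2 \<or> j = 3 \<or> j = 4" using assms(3) by linarith
  then show ?thesis
  proof (elim disjE)
    assume j: "j = 0"
    have q: "{b', c 1} \<in> E" "{b', c 4} \<in> E" using assms(2) unfolding j pat0 by simp_all
    have "{b, b'} \<in> E"
    proof (rule ccontr)
      assume h: "{b, b'} \<notin> E"
      show False using noC4[of b "c 1" b' "c 4"] assms(4,5,6) h p(1) esym[OF q(1)] q(2) esym[OF p(2)] by (simp add: cs)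
    qed
    then show ?thesis using j by (simp add: near_def)
  next
    assume j: "j = 1"
    have q: "{b', c 2} \<in> E" "{b', c 3} \<notin> E" "{b', c 4} \<notin> E" using assms(2) unfolding j pat1 by simp_all
    have "{b, b'} \<in> E"
    proof (rule ccontr)
      assume h: "{b, b'} \<notin> E"
      show False using noP5[of b "c 4" "c 3" "c 2" b'] assms(4,5,6) h p esym[OF q(1)] nesym[OF q(2)] nesym[OF q(3)]
        by (simp add: cs)
    qed
    then show ?thesis using j by (simp add: near_def)
  next
    assume j: "j = 4"
    have q: "{b', c 3} \<in> E" "{b', c 1} \<notin> E" "{b', c 2} \<notin> E" using assms(2) cs unfolding j pat4 by simp_all
    have "{b, b'} \<in> E"
    proof (rule ccontr)
      assume h: "{b, b'} \<notin> E"
      show False using noP5[of b "c 1" "c 2" "c 3" b'] assms(4,5,6) h p esym[OF q(1)] nesym[OF q(2)] nesym[OF q(3)]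
        by (simp add: cs)
    qed
    then show ?thesis using j by (simp add: near_def)
  next
    assume j: "j = 2"
    have q: "{b', c 3} \<in> E" "{b', c 4} \<notin> E" "{b', c 1} \<in> E" using assms(2) cs unfolding j pat2 by simp_all
    have ne: "b \<noteq> c 3" "b' \<noteq> c 4" using p(1) q(3) by (auto simp: cs)
    have "{b, b'} \<notin> E"
    proof
      assume h: "{b, b'} \<in> E"
      show False using noC4[of b b' "c 3" "c 4"] assms(5,6) h p q(1,2) ne esym[OF p(2)] by (simp add: cs)
    qed
    then show ?thesis using j by (simp add: near_def)
  next
    assume j: "j = 3"
    have q: "{b', c 2} \<in> E" "{b', c 1} \<notin> E" "{b', c 4} \<in> E" using assms(2) cs unfolding j pat3 by simp_all
    have ne: "b \<noteq> c 2" "b' \<noteq> c 1" using p(2) q(3) by (auto simp: cs)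
    have "{b, b'} \<notin> E"
    proof
      assume h: "{b, b'} \<in> E"
      show False using noC4[of b b' "c 2" "c 1"] assms(5,6) h p q(1,2) ne esym[OF p(1)] by (simp add: cs)
    qed
    then show ?thesis using j by (simp add: near_def)
  qed
qed

end


definition split_ok :: "'a set \<Rightarrow> 'a set set \<Rightarrow> 'a set \<Rightarrow> 'a set \<Rightarrow> bool" where
  "split_ok V E B Y \<longleftrightarrow> B \<noteq> {} \<and> B \<subseteq> V \<and> Y \<subseteq> V \<and> B \<inter> Y = {} \<and> B \<noteq> V \<and>
     (\<forall>y\<in>Y. \<forall>y'\<in>Y. y \<noteq> y' \<longrightarrow> {y, y'} \<in> E) \<and> (\<forall>b\<in>B. \<forall>y\<in>Y. {b, y} \<in> E) \<and>
     (\<forall>b\<in>B. \<forall>z\<in>V - B - Y. {b, z} \<notin> E)"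

definition blowup :: "'a set \<Rightarrow> 'a set set \<Rightarrow> bool" where
  "blowup V E \<longleftrightarrow> (\<exists>q. (\<forall>v\<in>V. q v < (5::nat)) \<and> (\<exists>x\<in>V. \<exists>y\<in>V. x \<noteq> y \<and> {x, y} \<notin> E) \<and>
     (\<forall>x\<in>V. \<forall>y\<in>V. x \<noteq> y \<longrightarrow> ({x, y} \<in> E) = near (q x) (q y)))"

lemma pat_self: "cyc V E c \<Longrightarrow> pat E c (c 0) 0"
  unfolding pat0 by (simp add: cyc_adj)

lemma pat_self_k: assumes "cyc V E c" shows "pat E c (c k) (k mod 5)"
proof -
  have "pat E (\<lambda>j. c (j + k)) (c (0 + k)) 0" using pat_self[OF cyc_rot[OF assms]] by simp
  then have "pat E c (c k) k" using pat_rot[of E c "c k" k] by simp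
  then show ?thesis using pat_mod[OF assms, of k "k mod 5"] by simp
qed

lemma cls:
  assumes cy: "cyc V E c" and lp: "loopless E" and fr: "P5_C4_free V E"
    and v: "v \<in> V" "\<forall>k. v \<noteq> c k"
  shows "(\<forall>k<5. {v, c k} \<in> E) \<or> (\<forall>k<5. {v, c k} \<notin> E) \<or> (\<exists>i<5. pat E c v i)"
proof -
  have r: "\<And>i. cyc V E (\<lambda>k. c (k + i))" using cyc_rot[OF cy] .
  have nv: "\<And>i. \<forall>k. v \<noteq> c (k + i)" using v(2) by auto
  note w = cyc_wrap[OF cy]
  have A: "{v, c (0+i)} \<in> E \<Longrightarrow> {v, c (2+i)} \<in> E \<Longrightarrow> {v, c (1+i)} \<in> E" for i
    using LL1[OF r lp fr v(1) nv] by simp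
  have B: "{v, c (0+i)} \<in> E \<Longrightarrow> {v, c (1+i)} \<notin> E \<Longrightarrow> {v, c (2+i)} \<notin> E \<Longrightarrow> {v, c (3+i)} \<notin> E \<Longrightarrow> False" for i
    using LL2[OF r lp fr v(1)] by simp
  have A0: "{v, c 0} \<in> E \<Longrightarrow> {v, c 2} \<in> E \<Longrightarrow> {v, c 1} \<in> E" using A[of 0] by (simp add: eval_nat_numeral)
  have A1: "{v, c 1} \<in> E \<Longrightarrow> {v, c 3} \<in> E \<Longrightarrow> {v, c 2} \<in> E" using A[of 1] by (simp add: eval_nat_numeral)
  have A2: "{v, c 2} \<in> E \<Longrightarrow> {v, c 4} \<in> E \<Longrightarrow> {v, c 3} \<in> E" using A[of 2] by (simp add: eval_nat_numeral)
  have A3: "{v, c 3} \<in> E \<Longrightarrow> {v, c 0} \<in> E \<Longrightarrow> {v, c 4} \<in> E" using A[of 3] w by (simp add: eval_nat_numeral)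
  have A4: "{v, c 4} \<in> E \<Longrightarrow> {v, c 1} \<in> E \<Longrightarrow> {v, c 0} \<in> E" using A[of 4] w by (simp add: eval_nat_numeral)
  have B0: "{v, c 0} \<in> E \<Longrightarrow> {v, c 1} \<notin> E \<Longrightarrow> {v, c 2} \<notin> E \<Longrightarrow> {v, c 3} \<notin> E \<Longrightarrow> False" using B[of 0] by (simp add: eval_nat_numeral)
  have B1: "{v, c 1} \<in> E \<Longrightarrow> {v, c 2} \<notin> E \<Longrightarrow> {v, c 3} \<notin> E \<Longrightarrow> {v, c 4} \<notin> E \<Longrightarrow> False" using B[of 1] by (simp add: eval_nat_numeral)
  have B2: "{v, c 2} \<in> E \<Longrightarrow> {v, c 3} \<notin> E \<Longrightarrow> {v, c 4} \<notin> E \<Longrightarrow> {v, c 0} \<notin> E \<Longrightarrow> False" using B[of 2] w by (simp add: eval_nat_numeral)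
  have B3: "{v, c 3} \<in> E \<Longrightarrow> {v, c 4} \<notin> E \<Longrightarrow> {v, c 0} \<notin> E \<Longrightarrow> {v, c 1} \<notin> E \<Longrightarrow> False" using B[of 3] w by (simp add: eval_nat_numeral)
  have B4: "{v, c 4} \<in> E \<Longrightarrow> {v, c 0} \<notin> E \<Longrightarrow> {v, c 1} \<notin> E \<Longrightarrow> {v, c 2} \<notin> E \<Longrightarrow> False" using B[of 4] w by (simp add: eval_nat_numeral)
  show ?thesis
    apply (unfold all5 ex5 pat0 pat1 pat2 pat3 pat4)
    apply (simp only: w)
    using A0 A1 A2 A3 A4 B0 B1 B2 B3 B4 by argo
qed

lemma pat_unique:
  assumes cy: "cyc V E c" and "pat E c v i" "pat E c v j" "i < 5" "j < 5"
  shows "i = j"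
proof -
  let ?r = "\<lambda>k. c (k + i)"
  have r: "cyc V E ?r" using cyc_rot[OF cy] .
  have p0: "pat E ?r v 0" using assms(2) pat_rot by metis
  have pj: "pat E ?r v ((j + 5 - i) mod 5)" using pat_rot_gen[OF cy assms(4,5)] assms(3) by simp
  have "(j + 5 - i) mod 5 < 5" by simp
  then have "(j + 5 - i) mod 5 = 0 \<or> (j + 5 - i) mod 5 = 1 \<or> (j + 5 - i) mod 5 = 2 \<or> (j + 5 - i) mod 5 = 3 \<or> (j + 5 - i) mod 5 = 4"
    by linarith
  moreover have "(j + 5 - i) mod 5 \<noteq> 1"
  proof
    assume h: "(j + 5 - i) mod 5 = 1"
    have "pat E ?r v 1" using pj h by simp
    then show False using p0 unfolding pat0 pat1 by auto
  qed
  moreover have "(j + 5 - i) mod 5 \<noteq> 2"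
  proof
    assume h: "(j + 5 - i) mod 5 = 2"
    have "pat E ?r v 2" using pj h by simp
    then show False using p0 unfolding pat0 pat2 by auto
  qed
  moreover have "(j + 5 - i) mod 5 \<noteq> 3"
  proof
    assume h: "(j + 5 - i) mod 5 = 3"
    have "pat E ?r v 3" using pj h by simp
    then show False using p0 cyc_wrap[OF r] unfolding pat0 pat3 by auto
  qed
  moreover have "(j + 5 - i) mod 5 \<noteq> 4"
  proof
    assume h: "(j + 5 - i) mod 5 = 4"
    have "pat E ?r v 4" using pj h by simp
    then show False using p0 cyc_wrap[OF r] unfolding pat0 pat4 by auto
  qed
  ultimately have "(j + 5 - i) mod 5 = 0" by blast
  then show ?thesis using assms(4,5) by presburger
qed


lemma esymg: "{a,b} \<in> E \<Longrightarrow> {b,a} \<in> E" by (simp add: insert_commute)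

lemma C5_case:
  assumes cy: "cyc V E c" and lp: "loopless E" and fr: "P5_C4_free V E"
  shows "(\<exists>B Y. split_ok V E B Y) \<or> blowup V E"
proof -
  define B where "B = {v\<in>V. \<exists>i<5. pat E c v i}"
  define Y where "Y = {v\<in>V. \<forall>k. {v, c k} \<in> E}"
  define Z where "Z = {v\<in>V. \<forall>k. {v, c k} \<notin> E}"
  have r: "\<And>i. cyc V E (\<lambda>k. c (k + i))" using cyc_rot[OF cy] .
  have cB: "c k \<in> B" for k
  proof -
    have "k mod 5 < 5" by simp
    then show ?thesis using pat_self_k[OF cy, of k] cyc_V[OF cy, of k] unfolding B_def by blast
  qed
  have modk: "({v, c k} \<in> E) = ({v, c (k mod 5)} \<in> E)" for v k using cyc_modk[OF cy, of k] by simp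
  have cover: "v \<in> B \<or> v \<in> Y \<or> v \<in> Z" if v: "v \<in> V" for v
  proof (cases "\<exists>k. v = c k")
    case True then show ?thesis using cB by auto
  next
    case False
    then have "(\<forall>k<5. {v, c k} \<in> E) \<or> (\<forall>k<5. {v, c k} \<notin> E) \<or> (\<exists>i<5. pat E c v i)"
      using cls[OF cy lp fr v] by blast
    moreover have "v \<in> Y" if h: "\<forall>k<5. {v, c k} \<in> E"
    proof -
      have "{v, c k} \<in> E" for k using h[rule_format, of "k mod 5"] modk[of v k] by simp
      then show ?thesis unfolding Y_def using v by blast
    qed
    moreover have "v \<in> Z" if h: "\<forall>k<5. {v, c k} \<notin> E"
    proof -
      have "{v, c k} \<notin> E" for k using h[rule_format, of "k mod 5"] modk[of v k] by simp
      then show ?thesis unfolding Z_def using v by blast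
    qed
    ultimately show ?thesis unfolding B_def using v by blast
  qed
  have patB: "\<And>v. v \<in> B \<Longrightarrow> \<exists>i<5. pat E c v i" unfolding B_def by auto
  have BY: "B \<inter> Y = {}"
  proof (rule ccontr)
    assume "B \<inter> Y \<noteq> {}"
    then obtain v i where vi: "pat E c v i" "\<forall>k. {v, c k} \<in> E" unfolding B_def Y_def by blast
    have "{v, c (i+2)} \<notin> E" using vi(1) unfolding pat_def by simp
    then show False using vi(2) by simp
  qed
  have Ycl: "\<forall>y\<in>Y. \<forall>y'\<in>Y. y \<noteq> y' \<longrightarrow> {y, y'} \<in> E"
  proof (intro ballI impI, rule ccontr)
    fix y y' assume y: "y \<in> Y" "y' \<in> Y" "y \<noteq> y'" "{y, y'} \<notin> E"
    have e: "{y, c 0} \<in> E" "{y', c 0} \<in> E" "{y, c 2} \<in> E" "{y', c 2} \<in> E" using y unfolding Y_def by auto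
    show False using noC4[OF cy lp fr, of y "c 0" y' "c 2"] y e esymg[OF e(2)] esymg[OF e(3)] cyc_V[OF cy]
      unfolding Y_def by (simp add: cyc_adj[OF cy] cyc_eq[OF cy])
  qed
  have YB: "\<forall>b\<in>B. \<forall>y\<in>Y. {b, y} \<in> E"
  proof (intro ballI)
    fix b y assume b: "b \<in> B" and y: "y \<in> Y"
    obtain i where i: "i < 5" "pat E c b i" using patB[OF b] by blast
    have p0: "pat E (\<lambda>k. c (k + i)) b 0" using i(2) pat_rot by metis
    have "b \<noteq> y" using b y BY by auto
    then show "{b, y} \<in> E" using LL4[OF r lp fr p0] b y unfolding B_def Y_def by auto
  qed
  have BZ: "\<forall>b\<in>B. \<forall>z\<in>V - B - Y. {b, z} \<notin> E"
  proof (intro ballI notI)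
    fix b z assume b: "b \<in> B" and z: "z \<in> V - B - Y" and e: "{b, z} \<in> E"
    have zZ: "z \<in> Z" using cover z by auto
    obtain i where i: "i < 5" "pat E c b i" using patB[OF b] by blast
    have p0: "pat E (\<lambda>k. c (k + i)) b 0" using i(2) pat_rot by metis
    show False using LL5[OF r lp fr p0] b zZ e unfolding B_def Z_def by auto
  qed
  show ?thesis
  proof (cases "B = V")
    case False
    have "B \<noteq> {}" using cB[of 0] by blast
    moreover have "B \<subseteq> V" "Y \<subseteq> V" unfolding B_def Y_def by auto
    ultimately have "split_ok V E B Y" unfolding split_ok_def
      using False BY Ycl YB BZ by blast
    then show ?thesis by blast
  next
    case True
    define q where "q v = (SOME i. i < 5 \<and> pat E c v i)" for v
    have q: "q v < 5 \<and> pat E c v (q v)" if "v \<in> V" for v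
      using patB[of v] True that unfolding q_def by (metis (mono_tags, lifting) someI_ex)
    have adj: "({x, y} \<in> E) = near (q x) (q y)" if xy: "x \<in> V" "y \<in> V" "x \<noteq> y" for x y
    proof -
      have p0: "pat E (\<lambda>k. c (k + q x)) x 0" using q[OF xy(1)] pat_rot by metis
      have pj: "pat E (\<lambda>k. c (k + q x)) y ((q y + 5 - q x) mod 5)"
        using pat_rot_gen[OF cy, of "q x" "q y"] q[OF xy(1)] q[OF xy(2)] by simp
      have "({x, y} \<in> E) = near 0 ((q y + 5 - q x) mod 5)"
        using LL6[OF r lp fr p0 pj] xy by simp
      then show ?thesis using near_rot q[OF xy(1)] q[OF xy(2)] by simp
    qed
    have "blowup V E" unfolding blowup_def
    proof (intro exI conjI)
      show "\<forall>v\<in>V. q v < 5" using q by blast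
      show "\<exists>x\<in>V. \<exists>y\<in>V. x \<noteq> y \<and> {x, y} \<notin> E"
      proof (intro bexI conjI)
        show "c 0 \<noteq> c 2" "{c 0, c 2} \<notin> E" by (simp_all add: cyc_adj[OF cy] cyc_eq[OF cy])
      qed (simp_all add: cyc_V[OF cy])
      show "\<forall>x\<in>V. \<forall>y\<in>V. x \<noteq> y \<longrightarrow> ({x, y} \<in> E) = near (q x) (q y)" using adj by blast
    qed
    then show ?thesis by blast
  qed
qed

lemma noC4g: "loopless E \<Longrightarrow> P5_C4_free V E \<Longrightarrow> a \<in> V \<Longrightarrow> b \<in> V \<Longrightarrow> c' \<in> V \<Longrightarrow> d \<in> V \<Longrightarrow> a \<noteq> c' \<Longrightarrow> b \<noteq> d \<Longrightarrow>
    {a,b} \<in> E \<Longrightarrow> {b,c'} \<in> E \<Longrightarrow> {c',d} \<in> E \<Longrightarrow> {d,a} \<in> E \<Longrightarrow> {a,c'} \<notin> E \<Longrightarrow> {b,d} \<notin> E \<Longrightarrow> False"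
  using C4_ind[of a V b c' d E] unfolding P5_C4_free_def by blast

lemma noP5g: "loopless E \<Longrightarrow> P5_C4_free V E \<Longrightarrow> a \<in> V \<Longrightarrow> b \<in> V \<Longrightarrow> c' \<in> V \<Longrightarrow> d \<in> V \<Longrightarrow> e \<in> V \<Longrightarrow>
    {a,b} \<in> E \<Longrightarrow> {b,c'} \<in> E \<Longrightarrow> {c',d} \<in> E \<Longrightarrow> {d,e} \<in> E \<Longrightarrow>
    {a,c'} \<notin> E \<Longrightarrow> {a,d} \<notin> E \<Longrightarrow> {a,e} \<notin> E \<Longrightarrow> {b,d} \<notin> E \<Longrightarrow> {b,e} \<notin> E \<Longrightarrow> {c',e} \<notin> E \<Longrightarrow> False"
  using P5_ind[of E a V b c' d e] unfolding P5_C4_free_def by blast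

lemma noC5_case:
  assumes fin: "finite V" and lp: "loopless E" and fr: "P5_C4_free V E"
    and nc5: "\<not> has_induced V E 5 C5_adj" and two: "2 \<le> card V"
  shows "\<exists>B Y. split_ok V E B Y"
proof -
  have lp': "\<And>v. {v} \<notin> E" using lp unfolding loopless_def by auto
  define N where "N v = {w\<in>V. {v, w} \<in> E}" for v
  have finN: "finite (N v)" for v unfolding N_def using fin by auto
  have Vne: "V \<noteq> {}" using two by auto
  define m where "m = Max ((\<lambda>v. card (N v)) ` V)"
  have "m \<in> (\<lambda>v. card (N v)) ` V" unfolding m_def using fin Vne by (intro Max_in) auto
  then obtain x where x: "x \<in> V" "card (N x) = m" by auto
  have xmax: "card (N v) \<le> card (N x)" if "v \<in> V" for v
    using Max_ge[of "(\<lambda>v. card (N v)) ` V"] fin that x(2) unfolding m_def by auto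
  have xN: "x \<notin> N x" unfolding N_def using lp' by auto
  show ?thesis
  proof (cases "V \<subseteq> insert x (N x)")
    case True
    define B where "B = V - {x}"
    have "B \<noteq> {}"
    proof
      assume "B = {}"
      then have "V \<subseteq> {x}" unfolding B_def by auto
      then have "card V \<le> card {x}" using card_mono[of "{x}" V] by simp
      then show False using two by simp
    qed
    moreover have "\<forall>b\<in>B. \<forall>y\<in>{x}. {b, y} \<in> E"
    proof (intro ballI)
      fix b y assume "b \<in> B" "y \<in> {x}"
      then have "b \<in> N x" "y = x" using True unfolding B_def by auto
      then show "{b, y} \<in> E" unfolding N_def by (simp add: insert_commute)
    qed
    moreover have "B \<subseteq> V" "{x} \<subseteq> V" "B \<inter> {x} = {}" "B \<noteq> V" using x(1) unfolding B_def by auto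
    moreover have "\<forall>b\<in>B. \<forall>z\<in>V - B - {x}. {b, z} \<notin> E" unfolding B_def by auto
    ultimately have "split_ok V E B {x}" unfolding split_ok_def by simp
    then show ?thesis by blast
  next
    case False
    define M where "M = V - insert x (N x)"
    have Mne: "M \<noteq> {}" using False unfolding M_def by auto
    define closed where "closed D \<longleftrightarrow> (\<forall>d\<in>D. \<forall>w\<in>M. {d, w} \<in> E \<longrightarrow> w \<in> D)" for D
    define F where "F = {D. D \<subseteq> M \<and> D \<noteq> {} \<and> closed D}"
    have "F \<subseteq> Pow M" unfolding F_def by auto
    moreover have "finite M" using fin unfolding M_def by auto
    ultimately have "finite F" using finite_subset by blast
    moreover have "M \<in> F" unfolding F_def closed_def using Mne by auto
    ultimately obtain D where D: "D \<in> F" and Dmin: "\<forall>D'\<in>F. D' \<le> D \<longrightarrow> D = D'"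
      using finite_has_minimal[of F] by blast
    have DM: "D \<subseteq> M" and Dne: "D \<noteq> {}" and Dcl: "closed D" using D unfolding F_def by auto
    have DV: "D \<subseteq> V" using DM unfolding M_def by auto
    have Dx: "\<And>d. d \<in> D \<Longrightarrow> {x, d} \<notin> E \<and> d \<noteq> x \<and> d \<notin> N x" using DM x(1) unfolding M_def N_def by auto
    define S where "S = {s\<in>V - D. \<exists>d\<in>D. {s, d} \<in> E}"
    have SN: "S \<subseteq> N x"
    proof
      fix s assume s: "s \<in> S"
      then obtain d where d: "d \<in> D" "{s, d} \<in> E" unfolding S_def by auto
      have "s \<noteq> x" using Dx[OF d(1)] d(2) by auto
      moreover have "s \<notin> M"
      proof
        assume "s \<in> M"
        moreover have "{d, s} \<in> E" using d(2) by (simp add: insert_commute)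
        ultimately have "s \<in> D" using Dcl d(1) unfolding closed_def by blast
        then show False using s unfolding S_def by auto
      qed
      ultimately show "s \<in> N x" using s unfolding S_def M_def by auto
    qed
    have compl: "\<forall>d\<in>D. {s, d} \<in> E" if s: "s \<in> S" for s
    proof -
      define Ds where "Ds = {d\<in>D. {s, d} \<in> E}"
      have sV: "s \<in> V" "s \<notin> D" using s unfolding S_def by auto
      have sx: "{s, x} \<in> E" using SN s unfolding N_def by (auto simp: insert_commute)
      have "Ds \<noteq> {}" using s unfolding S_def Ds_def by auto
      moreover have "Ds \<subseteq> M" using DM unfolding Ds_def by auto
      moreover have "closed Ds" unfolding closed_def
      proof (intro ballI impI)
        fix d w assume d: "d \<in> Ds" and w: "w \<in> M" and dw: "{d, w} \<in> E"
        have wD: "w \<in> D" using Dcl d w dw unfolding closed_def Ds_def by auto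
        have dD: "d \<in> D" "{s, d} \<in> E" using d unfolding Ds_def by auto
        have wx: "{x, w} \<notin> E" "w \<in> V" "w \<noteq> x" using w x(1) unfolding M_def N_def by auto
        have "{s, w} \<in> E"
        proof (rule ccontr)
          assume sw: "{s, w} \<notin> E"
          obtain w' where w': "w' \<in> N x" "w' \<noteq> s" "{s, w'} \<notin> E"
          proof (rule ccontr)
            assume "\<not> thesis"
            then have all: "\<forall>w'\<in>N x. w' \<noteq> s \<longrightarrow> {s, w'} \<in> E" using that by blast
            have sub: "insert x (insert d (N x - {s})) \<subseteq> N s"
            proof
              fix u assume u: "u \<in> insert x (insert d (N x - {s}))"
              have "d \<in> V" using DV dD by auto
              have "u = x \<or> u = d \<or> (u \<in> N x \<and> u \<noteq> s)" using u by auto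
              then show "u \<in> N s"
              proof (elim disjE)
                assume "u = x" then show ?thesis using sx x(1) unfolding N_def by simp
              next
                assume "u = d" then show ?thesis using dD \<open>d \<in> V\<close> unfolding N_def by simp
              next
                assume "u \<in> N x \<and> u \<noteq> s" then show ?thesis using all unfolding N_def by simp
              qed
            qed
            have sNx: "s \<in> N x" using SN s by auto
            have "card (insert x (insert d (N x - {s}))) = card (N x - {s}) + 2"
            proof -
              have f: "finite (N x - {s})" using finN by simp
              have n1: "d \<notin> N x - {s}" using Dx[OF dD(1)] by simp
              have n2: "x \<notin> insert d (N x - {s})" using Dx[OF dD(1)] xN by auto
              show ?thesis using card_insert_disjoint[OF f n1] card_insert_disjoint[OF _ n2] f by simp
            qed
            also have "card (N x - {s}) = card (N x) - 1" using sNx finN by simp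
            finally have c2: "card (insert x (insert d (N x - {s}))) = card (N x) - 1 + 2" .
            have c1: "card (insert x (insert d (N x - {s}))) \<le> card (N s)" using card_mono[OF finN sub] .
            have "card (N x) \<ge> 1" using sNx finN card_gt_0_iff by (metis One_nat_def Suc_leI emptyE)
            then have "card (N s) \<ge> card (N x) + 1" using c1 c2 by linarith
            then show False using xmax[OF sV(1)] by simp
          qed
          have w'V: "w' \<in> V" "{x, w'} \<in> E" using w'(1) unfolding N_def by auto
          have w'd: "{w', d} \<notin> E"
          proof
            assume h: "{w', d} \<in> E"
            have "d \<in> V" using DV dD by auto
            show False apply (rule noC4g[OF lp fr, of w' d s x])
              using w'V sV dD \<open>d \<in> V\<close> x(1) w' h sx Dx[OF dD(1)] by (simp_all add: insert_commute)
          qed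
          have w'w: "{w', w} \<notin> E"
          proof
            assume h: "{w', w} \<in> E"
            have "d \<in> V" using DV dD by auto
            have "has_induced V E 5 C5_adj" apply (rule C5_ind[OF lp, of w V d s x w'])
              using wx w'V sV dD \<open>d \<in> V\<close> x(1) w' h sx Dx[OF dD(1)] dw sw w'd
              by (simp_all add: insert_commute)
            then show False using nc5 by simp
          qed
          have "d \<in> V" using DV dD by auto
          show False apply (rule noP5g[OF lp fr, of w d s x w'])
            using wx w'V sV dD \<open>d \<in> V\<close> x(1) w' sx Dx[OF dD(1)] dw sw w'd w'w
            by (simp_all add: insert_commute)
        qed
        then show "w \<in> Ds" using wD unfolding Ds_def by auto
      qed
      ultimately have "Ds \<in> F" unfolding F_def by auto
      moreover have "Ds \<le> D" unfolding Ds_def by auto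
      ultimately have "D = Ds" using Dmin by blast
      then show ?thesis unfolding Ds_def by auto
    qed
    obtain d0 where d0: "d0 \<in> D" using Dne by auto
    have Scl: "\<forall>y\<in>S. \<forall>y'\<in>S. y \<noteq> y' \<longrightarrow> {y, y'} \<in> E"
    proof (intro ballI impI, rule ccontr)
      fix s t assume st: "s \<in> S" "t \<in> S" "s \<noteq> t" "{s, t} \<notin> E"
      have e: "{s, d0} \<in> E" "{t, d0} \<in> E" using compl st d0 by auto
      have ex: "{s, x} \<in> E" "{t, x} \<in> E" using SN st unfolding N_def by (auto simp: insert_commute)
      have V: "s \<in> V" "t \<in> V" using st unfolding S_def by auto
      have "d0 \<in> V" using DV d0 by auto
      show False apply (rule noC4g[OF lp fr, of s d0 t x])
        using V \<open>d0 \<in> V\<close> x(1) st e ex Dx[OF d0] by (simp_all add: insert_commute)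
    qed
    have "split_ok V E D S" unfolding split_ok_def
    proof (intro conjI)
      show "D \<noteq> V" using Dx x(1) by auto
      show "\<forall>b\<in>D. \<forall>y\<in>S. {b, y} \<in> E"
      proof (intro ballI)
        fix b y assume "b \<in> D" "y \<in> S"
        then have "{y, b} \<in> E" using compl by blast
        then show "{b, y} \<in> E" by (simp add: insert_commute)
      qed
      show "\<forall>b\<in>D. \<forall>z\<in>V - D - S. {b, z} \<notin> E"
      proof (intro ballI notI)
        fix b z assume b: "b \<in> D" and z: "z \<in> V - D - S" and e: "{b, z} \<in> E"
        have "{z, b} \<in> E" using e by (simp add: insert_commute)
        then have "z \<in> S" using b z unfolding S_def by blast
        then show False using z by blast
      qed
      show "D \<noteq> {}" by (rule Dne)
      show "D \<subseteq> V" by (rule DV)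
      show "S \<subseteq> V" unfolding S_def by blast
      show "D \<inter> S = {}" unfolding S_def by blast
      show "\<forall>y\<in>S. \<forall>y'\<in>S. y \<noteq> y' \<longrightarrow> {y, y'} \<in> E" by (rule Scl)
    qed
    then show ?thesis by blast
  qed
qed

lemma graph_structure:
  assumes "finite V" "loopless E" "P5_C4_free V E" "2 \<le> card V"
  shows "(\<exists>B Y. split_ok V E B Y) \<or> blowup V E"
proof (cases "has_induced V E 5 C5_adj")
  case True
  then obtain c where "cyc V E c" using has_C5_cyc by blast
  then show ?thesis using C5_case assms by blast
next
  case False
  then show ?thesis using noC5_case assms by blast
qed

definition merge :: "'a set \<Rightarrow> ('a \<Rightarrow> nat) \<Rightarrow> ('a \<Rightarrow> nat) \<Rightarrow> 'a \<Rightarrow> nat" where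
  "merge B \<sigma> \<alpha> = (\<lambda>v. if v \<in> B then \<sigma> v else \<alpha> v)"

lemma card_diff_ge: "finite A \<Longrightarrow> card L - card A \<le> card (L - f ` A)"
  by (meson card_image_le diff_card_le_card_Diff diff_le_mono2 finite_imageI le_trans)

context
  fixes V :: "'a set" and E :: "'a set set" and B Y :: "'a set"
  assumes fin: "finite V" and lp: "loopless E" and sp: "split_ok V E B Y"
begin

lemma sp_facts: "B \<noteq> {}" "B \<subseteq> V" "Y \<subseteq> V" "B \<inter> Y = {}" "B \<noteq> V"
  "\<And>y y'. y \<in> Y \<Longrightarrow> y' \<in> Y \<Longrightarrow> y \<noteq> y' \<Longrightarrow> {y, y'} \<in> E"
  "\<And>b y. b \<in> B \<Longrightarrow> y \<in> Y \<Longrightarrow> {b, y} \<in> E"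
  "\<And>b z. b \<in> B \<Longrightarrow> z \<in> V \<Longrightarrow> z \<notin> B \<Longrightarrow> z \<notin> Y \<Longrightarrow> {b, z} \<notin> E"
  using sp unfolding split_ok_def by auto

lemma finY: "finite Y" using sp_facts(3) fin finite_subset by blast

lemma merge_col:
  assumes a: "col V E L \<alpha>" and s: "col B E L' \<sigma>" and L': "L' \<subseteq> L" "L' \<inter> \<alpha> ` Y = {}"
  shows "col V E L (merge B \<sigma> \<alpha>)"
proof (rule colI)
  fix v assume "v \<in> V" then show "merge B \<sigma> \<alpha> v \<in> L"
    using col_in[OF a] col_in[OF s] L' unfolding merge_def by auto
next
  fix v assume "v \<notin> V" then show "merge B \<sigma> \<alpha> v = undefined"
    using col_ext[OF a] sp_facts(2) unfolding merge_def by auto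
next
  fix u v assume uv: "u \<in> V" "v \<in> V" "{u, v} \<in> E"
  have cross: "\<sigma> b \<noteq> \<alpha> w" if "b \<in> B" "w \<in> V" "w \<notin> B" "{b, w} \<in> E" for b w
  proof -
    have "w \<in> Y" using sp_facts(8)[of b w] that by blast
    then show ?thesis using col_in[OF s that(1)] L'(2) by blast
  qed
  show "merge B \<sigma> \<alpha> u \<noteq> merge B \<sigma> \<alpha> v"
  proof (cases "u \<in> B")
    case True
    show ?thesis
    proof (cases "v \<in> B")
      case True then show ?thesis using \<open>u \<in> B\<close> col_adj[OF s] uv unfolding merge_def by auto
    next
      case False then show ?thesis using \<open>u \<in> B\<close> cross[of u v] uv unfolding merge_def by auto
    qed
  next
    case False
    show ?thesis
    proof (cases "v \<in> B")
      case True
      have "{v, u} \<in> E" using uv(3) by (simp add: insert_commute)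
      then show ?thesis using \<open>v \<in> B\<close> False cross[of v u] uv unfolding merge_def by auto
    next
      case F2: False then show ?thesis using False col_adj[OF a] uv unfolding merge_def by auto
    qed
  qed
qed

lemma merge_reach:
  assumes a: "col V E L \<alpha>" and L': "L' \<subseteq> L" "L' \<inter> \<alpha> ` Y = {}"
    and r: "reach B E L' \<sigma> \<sigma>'"
  shows "reach V E L (merge B \<sigma> \<alpha>) (merge B \<sigma>' \<alpha>)"
proof (rule reach_map[OF _ r])
  fix \<tau> \<tau>' assume st: "step B E L' \<tau> \<tau>'"
  then have c: "col B E L' \<tau>" "col B E L' \<tau>'" and d: "\<exists>u. \<forall>v. v \<noteq> u \<longrightarrow> \<tau> v = \<tau>' v"
    unfolding step_def by auto
  show "step V E L (merge B \<tau> \<alpha>) (merge B \<tau>' \<alpha>)" unfolding step_def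
    using merge_col[OF a c(1) L'] merge_col[OF a c(2) L'] d unfolding merge_def by auto
qed

lemma merge_self: "col V E L \<alpha> \<Longrightarrow> merge B (restrict \<alpha> B) \<alpha> = \<alpha>"
  unfolding merge_def by auto

lemma restrict_B_col:
  assumes a: "col V E L \<alpha>"
  shows "col B E (L - \<alpha> ` Y) (restrict \<alpha> B)"
proof (rule colI)
  fix v assume v: "v \<in> B"
  have "\<alpha> v \<notin> \<alpha> ` Y"
  proof
    assume "\<alpha> v \<in> \<alpha> ` Y"
    then obtain y where "y \<in> Y" "\<alpha> v = \<alpha> y" by auto
    then show False using col_adj[OF a, of v y] sp_facts(2,3,7) v by auto
  qed
  then show "restrict \<alpha> B v \<in> L - \<alpha> ` Y" using v col_in[OF a] sp_facts(2) by auto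
next
  fix u v assume "u \<in> B" "v \<in> B" "{u, v} \<in> E"
  then show "restrict \<alpha> B u \<noteq> restrict \<alpha> B v" using col_adj[OF a] sp_facts(2) by auto
qed auto

lemma chi_split: "chromatic_number B E + card Y \<le> chromatic_number V E"
proof -
  let ?k = "chromatic_number V E"
  obtain \<gamma> where g: "col V E {1..?k} \<gamma>" using chi_col[OF fin lp] by blast
  have c: "col B E ({1..?k} - \<gamma> ` Y) (restrict \<gamma> B)" using restrict_B_col[OF g] .
  have "inj_on \<gamma> Y"
  proof (rule inj_onI)
    fix x y assume "x \<in> Y" "y \<in> Y" "\<gamma> x = \<gamma> y"
    then show "x = y" using col_adj[OF g, of x y] sp_facts(3,6) by blast
  qed
  then have "card (\<gamma> ` Y) = card Y" by (simp add: card_image)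
  moreover have "\<gamma> ` Y \<subseteq> {1..?k}" using col_in[OF g] sp_facts(3) by auto
  ultimately have "card ({1..?k} - \<gamma> ` Y) = ?k - card Y"
    using card_Diff_subset[of "\<gamma> ` Y" "{1..?k}"] finY by simp
  moreover have "card Y \<le> ?k" using clique_card_chi[OF fin lp sp_facts(3)] sp_facts(6) by blast
  ultimately show ?thesis using chi_le[OF c] by simp
qed

lemma B_moves:
  assumes IHB: "\<And>L'. finite L' \<Longrightarrow> chromatic_number B E + 1 \<le> card L' \<Longrightarrow> conn B E L'"
    and fL: "finite L" and cL: "chromatic_number V E + 1 \<le> card L"
    and a1: "col V E L \<alpha>1" and a2: "col V E L \<alpha>2" and eq: "\<And>v. v \<notin> B \<Longrightarrow> \<alpha>1 v = \<alpha>2 v"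
  shows "reach V E L \<alpha>1 \<alpha>2"
proof -
  let ?L' = "L - \<alpha>1 ` Y"
  have "card L - card Y \<le> card ?L'" using card_diff_ge[OF finY] .
  then have cL': "chromatic_number B E + 1 \<le> card ?L'" using chi_split cL by linarith
  have Y12: "\<alpha>1 ` Y = \<alpha>2 ` Y" using eq sp_facts(4) by (intro image_cong) auto
  have c1: "col B E ?L' (restrict \<alpha>1 B)" using restrict_B_col[OF a1] .
  have c2: "col B E ?L' (restrict \<alpha>2 B)" using restrict_B_col[OF a2] Y12 by simp
  have "reach B E ?L' (restrict \<alpha>1 B) (restrict \<alpha>2 B)"
    using IHB[OF _ cL'] fL c1 c2 unfolding conn_def by blast
  then have "reach V E L (merge B (restrict \<alpha>1 B) \<alpha>1) (merge B (restrict \<alpha>2 B) \<alpha>1)"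
    using merge_reach[OF a1, of ?L'] by auto
  moreover have "merge B (restrict \<alpha>2 B) \<alpha>1 = \<alpha>2" unfolding merge_def using eq by auto
  ultimately show ?thesis using merge_self[OF a1] by simp
qed

lemma lift_step:
  assumes IHB: "\<And>L'. finite L' \<Longrightarrow> chromatic_number B E + 1 \<le> card L' \<Longrightarrow> conn B E L'"
    and fL: "finite L" and cL: "chromatic_number V E + 1 \<le> card L"
    and st: "step (V - B) E L \<delta> \<delta>'" and a: "col V E L \<alpha>" and r: "restrict \<alpha> (V - B) = \<delta>"
  shows "\<exists>\<alpha>'. reach V E L \<alpha> \<alpha>' \<and> restrict \<alpha>' (V - B) = \<delta>'"
proof -
  let ?W = "V - B"
  have d: "col ?W E L \<delta>" "col ?W E L \<delta>'" and dif: "\<exists>u. \<forall>v. v \<noteq> u \<longrightarrow> \<delta> v = \<delta>' v"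
    using st unfolding step_def by auto
  obtain w where w: "\<forall>v. v \<noteq> w \<longrightarrow> \<delta> v = \<delta>' v" using dif by blast
  show ?thesis
  proof (cases "w \<in> ?W")
    case False
    then have "\<delta> = \<delta>'" using w col_ext[OF d(1)] col_ext[OF d(2)] by (metis ext)
    then show ?thesis using r by auto
  next
    case True
    let ?c = "\<delta>' w"
    have cL2: "?c \<in> L" using col_in[OF d(2) True] .
    let ?L' = "L - \<alpha> ` Y"
    let ?L'' = "L - \<alpha> ` Y - {?c}"
    have "card L - card Y \<le> card ?L'" using card_diff_ge[OF finY] .
    then have cL': "chromatic_number B E + 1 \<le> card ?L'" using chi_split cL by linarith
    have "card ?L' - 1 \<le> card ?L''" by (metis card_Diff_singleton_if diff_le_self order_refl)
    then have "chromatic_number B E \<le> card ?L''" using cL' by linarith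
    then obtain \<tau> where t: "col B E ?L'' \<tau>"
      using col_exists[of B E ?L''] fin lp fL sp_facts(2) finite_subset by blast
    have t': "col B E ?L' \<tau>" using col_mono_L[OF t] col_in[OF t] by blast
    have "reach B E ?L' (restrict \<alpha> B) \<tau>"
      using IHB[OF _ cL'] fL restrict_B_col[OF a] t' unfolding conn_def by blast
    then have r1: "reach V E L (merge B (restrict \<alpha> B) \<alpha>) (merge B \<tau> \<alpha>)"
      using merge_reach[OF a, of ?L'] by auto
    let ?\<alpha>1 = "merge B \<tau> \<alpha>"
    have a1: "col V E L ?\<alpha>1" using merge_col[OF a t'] by auto
    have wV: "w \<in> V" "w \<notin> B" using True by auto
    have nb: "?\<alpha>1 u \<noteq> ?c" if u: "u \<in> V" "{w, u} \<in> E" for u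
    proof (cases "u \<in> B")
      case True
      then show ?thesis using col_in[OF t True] unfolding merge_def by auto
    next
      case False
      have "u \<noteq> w" using u(2) lp unfolding loopless_def by auto
      then have "?\<alpha>1 u = \<delta>' u" using False w r u(1) unfolding merge_def by (metis Diff_iff restrict_apply')
      moreover have "\<delta>' w \<noteq> \<delta>' u" using col_adj[OF d(2) True, of u] u False by auto
      ultimately show ?thesis by simp
    qed
    have r2: "reach V E L ?\<alpha>1 (?\<alpha>1(w := ?c))" using reach_upd[OF a1 wV(1) cL2] nb by blast
    have fin_eq: "restrict (?\<alpha>1(w := ?c)) ?W = \<delta>'"
    proof (rule ext)
      fix v show "restrict (?\<alpha>1(w := ?c)) ?W v = \<delta>' v"
      proof (cases "v \<in> ?W")
        case True
        then show ?thesis using w r unfolding merge_def by (cases "v = w") (auto simp: restrict_def)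
      next
        case False
        then show ?thesis using col_ext[OF d(2)] by auto
      qed
    qed
    show ?thesis using r1 r2 fin_eq merge_self[OF a] by (metis rtranclp_trans)
  qed
qed

lemma split_conn:
  assumes IHB: "\<And>L'. finite L' \<Longrightarrow> chromatic_number B E + 1 \<le> card L' \<Longrightarrow> conn B E L'"
    and IHW: "\<And>L'. finite L' \<Longrightarrow> chromatic_number (V - B) E + 1 \<le> card L' \<Longrightarrow> conn (V - B) E L'"
    and fL: "finite L" and cL: "chromatic_number V E + 1 \<le> card L"
  shows "conn V E L"
  unfolding conn_def
proof (intro allI impI)
  fix \<alpha> \<beta> assume a: "col V E L \<alpha>" and b: "col V E L \<beta>"
  let ?W = "V - B"
  have "chromatic_number ?W E \<le> chromatic_number V E" using chi_mono[OF fin lp] by auto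
  then have cW: "conn ?W E L" using IHW[OF fL] cL by simp
  have "reach ?W E L (restrict \<alpha> ?W) (restrict \<beta> ?W)"
    using cW col_restrict[OF a] col_restrict[OF b] unfolding conn_def by blast
  then have "\<exists>\<alpha>'. reach V E L \<alpha> \<alpha>' \<and> restrict \<alpha>' ?W = restrict \<beta> ?W"
  proof (induction rule: rtranclp_induct)
    case base then show ?case by auto
  next
    case (step y z)
    then obtain \<alpha>'' where a'': "reach V E L \<alpha> \<alpha>''" "restrict \<alpha>'' ?W = y" by blast
    have "col V E L \<alpha>''" using reach_col[OF a''(1) a] .
    then obtain \<alpha>' where a': "reach V E L \<alpha>'' \<alpha>'" "restrict \<alpha>' ?W = z"
      using lift_step[OF IHB fL cL step(2) _ a''(2)] by blast
    have "reach V E L \<alpha> \<alpha>'" using a''(1) a'(1) by (rule rtranclp_trans)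
    then show ?case using a'(2) by blast
  qed
  then obtain \<alpha>' where a': "reach V E L \<alpha> \<alpha>'" "restrict \<alpha>' ?W = restrict \<beta> ?W" by blast
  have ca': "col V E L \<alpha>'" using reach_col[OF a'(1) a] .
  have "\<alpha>' v = \<beta> v" if "v \<notin> B" for v
  proof (cases "v \<in> V")
    case True
    then have "restrict \<alpha>' ?W v = restrict \<beta> ?W v" using a'(2) by simp
    then show ?thesis using True that by simp
  next
    case False then show ?thesis using col_ext[OF ca'] col_ext[OF b] by simp
  qed
  then have "reach V E L \<alpha>' \<beta>" using B_moves[OF IHB fL cL ca' b] by blast
  then show "reach V E L \<alpha> \<beta>" using a'(1) by (meson rtranclp_trans)
qed

end

definition inS :: "'a set \<Rightarrow> 'a set set \<Rightarrow> nat set \<Rightarrow> 'a \<Rightarrow> 'a \<Rightarrow> ('a \<Rightarrow> nat) \<Rightarrow> bool" where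
  "inS V E L u v \<sigma> \<longleftrightarrow> col V E L \<sigma> \<and> u \<noteq> v \<and> u \<in> V \<and> v \<in> V \<and> \<sigma> u = \<sigma> v \<and>
     (\<forall>w\<in>V. \<sigma> w = \<sigma> u \<longrightarrow> w = u \<or> w = v)"

definition good :: "'a set \<Rightarrow> 'a set set \<Rightarrow> nat set \<Rightarrow> ('a \<Rightarrow> nat) \<Rightarrow> bool" where
  "good V E L \<sigma> \<longleftrightarrow> (\<exists>u v. inS V E L u v \<sigma>) \<and> (\<exists>b\<in>L. b \<notin> \<sigma> ` V)"

lemma inS_sym: "inS V E L u v \<sigma> = inS V E L v u \<sigma>"
  unfolding inS_def by auto

lemma inS_nonadj: "inS V E L u v \<sigma> \<Longrightarrow> {u, v} \<notin> E"
  unfolding inS_def using col_adj by metis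

lemma build:
  assumes fin: "finite V" and lp: "loopless E" and fL: "finite L" and P: "P \<subseteq> V"
    and g: "\<And>w. w \<in> P \<Longrightarrow> g w \<in> Lp" "Lp \<subseteq> L"
    and gp: "\<And>x y. x \<in> P \<Longrightarrow> y \<in> P \<Longrightarrow> {x, y} \<in> E \<Longrightarrow> g x \<noteq> g y"
    and ch: "chromatic_number (V - P) E \<le> card (L - Lp)"
  shows "\<exists>\<rho>. col V E L \<rho> \<and> (\<forall>w\<in>P. \<rho> w = g w) \<and> (\<forall>w\<in>V - P. \<rho> w \<in> L - Lp)"
proof -
  obtain \<tau> where t: "col (V - P) E (L - Lp) \<tau>" using col_exists[of "V - P" E "L - Lp"] fin lp fL ch by auto
  let ?\<rho> = "\<lambda>w. if w \<in> P then g w else \<tau> w"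
  have "col V E L ?\<rho>"
  proof (rule colI)
    fix w assume "w \<in> V" then show "?\<rho> w \<in> L" using g col_in[OF t] by auto
  next
    fix w assume "w \<notin> V" then show "?\<rho> w = undefined" using P col_ext[OF t] by auto
  next
    fix x y assume xy: "x \<in> V" "y \<in> V" "{x, y} \<in> E"
    show "?\<rho> x \<noteq> ?\<rho> y"
    proof (cases "x \<in> P")
      case True
      then show ?thesis using gp[of x y] xy g(1)[OF True] col_in[OF t, of y] by (cases "y \<in> P") auto
    next
      case False
      then show ?thesis using xy g(1)[of y] col_in[OF t, of x] col_adj[OF t, of x y] by (cases "y \<in> P") auto
    qed
  qed
  then show ?thesis using col_in[OF t] by auto
qed

context
  fixes V :: "'a set" and E :: "'a set set" and L :: "nat set"
  assumes fin: "finite V" and lp: "loopless E" and fL: "finite L"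
begin

lemma S_conn:
  assumes uv: "u \<noteq> v" "u \<in> V" "v \<in> V" "{u, v} \<notin> E"
    and ch: "chromatic_number (V - {u, v}) E + 2 \<le> card L"
    and IH: "\<And>L'. finite L' \<Longrightarrow> chromatic_number (V - {u, v}) E + 1 \<le> card L' \<Longrightarrow> conn (V - {u, v}) E L'"
    and s1: "inS V E L u v \<sigma>1" and s2: "inS V E L u v \<sigma>2"
  shows "reach V E L \<sigma>1 \<sigma>2"
proof -
  let ?R = "V - {u, v}"
  define ex where "ex \<tau> a = (\<lambda>w. if w = u \<or> w = v then a else \<tau> w)" for \<tau> :: "'a \<Rightarrow> nat" and a
  have lp': "\<And>x. {x} \<notin> E" using lp unfolding loopless_def by auto
  have ex_col: "col V E L (ex \<tau> a)" if t: "col ?R E (L - {a}) \<tau>" and a: "a \<in> L" for \<tau> a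
  proof (rule colI)
    fix w assume "w \<in> V" then show "ex \<tau> a w \<in> L" using a col_in[OF t, of w] unfolding ex_def by auto
  next
    fix w assume "w \<notin> V" then show "ex \<tau> a w = undefined" using uv col_ext[OF t, of w] unfolding ex_def by auto
  next
    fix x y assume xy: "x \<in> V" "y \<in> V" "{x, y} \<in> E"
    have nuv: "{v, u} \<notin> E" using uv(4) by (simp add: insert_commute)
    show "ex \<tau> a x \<noteq> ex \<tau> a y"
    proof (cases "x = u \<or> x = v")
      case True
      show ?thesis
      proof (cases "y = u \<or> y = v")
        case True
        then show ?thesis using \<open>x = u \<or> x = v\<close> xy(3) uv(4) nuv lp' by auto
      next
        case False
        then show ?thesis using True col_in[OF t, of y] xy unfolding ex_def by auto
      qed
    next
      case False
      show ?thesis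
      proof (cases "y = u \<or> y = v")
        case True
        then show ?thesis using False col_in[OF t, of x] xy unfolding ex_def by auto
      next
        case F2: False
        then show ?thesis using False col_adj[OF t, of x y] xy unfolding ex_def by auto
      qed
    qed
  qed
  have ex_reach: "reach V E L (ex \<tau> a) (ex \<tau>' a)" if r: "reach ?R E (L - {a}) \<tau> \<tau>'" and a: "a \<in> L" for \<tau> \<tau>' a
  proof (rule reach_map[OF _ r])
    fix \<tau>1 \<tau>2 assume "step ?R E (L - {a}) \<tau>1 \<tau>2"
    then have c: "col ?R E (L - {a}) \<tau>1" "col ?R E (L - {a}) \<tau>2" and "\<exists>z. \<forall>w. w \<noteq> z \<longrightarrow> \<tau>1 w = \<tau>2 w"
      unfolding step_def by auto
    then obtain z where z: "\<forall>w. w \<noteq> z \<longrightarrow> \<tau>1 w = \<tau>2 w" by blast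
    have "\<forall>w. w \<noteq> z \<longrightarrow> ex \<tau>1 a w = ex \<tau>2 a w" using z unfolding ex_def by auto
    then show "step V E L (ex \<tau>1 a) (ex \<tau>2 a)" using ex_col[OF c(1) a] ex_col[OF c(2) a] unfolding step_def by blast
  qed
  have ex_self: "ex (restrict \<sigma> ?R) (\<sigma> u) = \<sigma>" and rcol: "col ?R E (L - {\<sigma> u}) (restrict \<sigma> ?R)"
    if s: "inS V E L u v \<sigma>" for \<sigma>
  proof -
    have c: "col V E L \<sigma>" using s unfolding inS_def by auto
    show "ex (restrict \<sigma> ?R) (\<sigma> u) = \<sigma>"
    proof (rule ext)
      fix w show "ex (restrict \<sigma> ?R) (\<sigma> u) w = \<sigma> w"
        using s col_ext[OF c, of w] unfolding ex_def inS_def by (cases "w \<in> V") auto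
    qed
    show "col ?R E (L - {\<sigma> u}) (restrict \<sigma> ?R)"
    proof (rule colI)
      fix w assume w: "w \<in> ?R"
      then have "\<sigma> w \<noteq> \<sigma> u" using s unfolding inS_def by auto
      then show "restrict \<sigma> ?R w \<in> L - {\<sigma> u}" using w col_in[OF c, of w] by auto
    next
      fix x y assume "x \<in> ?R" "y \<in> ?R" "{x, y} \<in> E"
      then show "restrict \<sigma> ?R x \<noteq> restrict \<sigma> ?R y" using col_adj[OF c, of x y] by auto
    qed auto
  qed
  let ?a1 = "\<sigma>1 u" and ?a2 = "\<sigma>2 u"
  have a1L: "?a1 \<in> L" and a2L: "?a2 \<in> L" using s1 s2 col_in unfolding inS_def by auto
  have "card L - 2 \<le> card (L - {?a1, ?a2})"
  proof -
    have "card {?a1, ?a2} \<le> 2" by (cases "?a1 = ?a2") auto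
    moreover have "card L - card {?a1, ?a2} \<le> card (L - {?a1, ?a2})" by (rule diff_card_le_card_Diff) simp
    ultimately show ?thesis by linarith
  qed
  then have "chromatic_number ?R E \<le> card (L - {?a1, ?a2})" using ch by linarith
  then obtain \<tau> where t: "col ?R E (L - {?a1, ?a2}) \<tau>"
    using col_exists[of ?R E "L - {?a1, ?a2}", OF _ lp] fin fL by blast
  have t1: "col ?R E (L - {?a1}) \<tau>" and t2: "col ?R E (L - {?a2}) \<tau>"
  proof -
    have "\<tau> ` ?R \<subseteq> L - {?a1}" "\<tau> ` ?R \<subseteq> L - {?a2}" using col_in[OF t] by auto
    then show "col ?R E (L - {?a1}) \<tau>" "col ?R E (L - {?a2}) \<tau>" using col_mono_L[OF t] by auto
  qed
  have cl1: "chromatic_number ?R E + 1 \<le> card (L - {?a1})" using ch a1L fL by simp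
  have cl2: "chromatic_number ?R E + 1 \<le> card (L - {?a2})" using ch a2L fL by simp
  have "reach ?R E (L - {?a1}) (restrict \<sigma>1 ?R) \<tau>"
    using IH[OF _ cl1] fL rcol[OF s1] t1 unfolding conn_def by blast
  from ex_reach[OF this a1L] have r1: "reach V E L \<sigma>1 (ex \<tau> ?a1)" using ex_self[OF s1] by simp
  have "reach ?R E (L - {?a2}) \<tau> (restrict \<sigma>2 ?R)"
    using IH[OF _ cl2] fL rcol[OF s2] t2 unfolding conn_def by blast
  from ex_reach[OF this a2L] have r3: "reach V E L (ex \<tau> ?a2) \<sigma>2" using ex_self[OF s2] by simp
  have e1: "col V E L (ex \<tau> ?a1)" using ex_col[OF t1 a1L] .
  have m1: "reach V E L (ex \<tau> ?a1) ((ex \<tau> ?a1)(u := ?a2))"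
  proof (rule reach_upd[OF e1 uv(2) a2L])
    fix w assume w: "w \<in> V" "{u, w} \<in> E"
    then have "w \<noteq> u" "w \<noteq> v" using lp' uv(4) by auto
    then show "ex \<tau> ?a1 w \<noteq> ?a2" using col_in[OF t, of w] w unfolding ex_def by auto
  qed
  have e2: "col V E L ((ex \<tau> ?a1)(u := ?a2))" using m1 e1 reach_col by blast
  have m2: "reach V E L ((ex \<tau> ?a1)(u := ?a2)) ((ex \<tau> ?a1)(u := ?a2, v := ?a2))"
  proof (rule reach_upd[OF e2 uv(3) a2L])
    fix w assume w: "w \<in> V" "{v, w} \<in> E"
    then have "w \<noteq> u" "w \<noteq> v" using lp' uv(4) by (auto simp: insert_commute)
    then show "((ex \<tau> ?a1)(u := ?a2)) w \<noteq> ?a2" using col_in[OF t, of w] w unfolding ex_def by auto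
  qed
  have "(ex \<tau> ?a1)(u := ?a2, v := ?a2) = ex \<tau> ?a2" unfolding ex_def by auto
  then show ?thesis using r1 m1 m2 r3 rtranclp_trans[of "step V E L"] by metis
qed

definition vp where
  "vp u v \<longleftrightarrow> u \<noteq> v \<and> u \<in> V \<and> v \<in> V \<and> {u, v} \<notin> E \<and> chromatic_number (V - {u, v}) E + 2 \<le> card L"

lemma vp_sym: "vp u v = vp v u"
  unfolding vp_def by (auto simp: insert_commute)

lemma good_vp:
  assumes s: "inS V E L u v \<sigma>" and b: "b \<in> L" "b \<notin> \<sigma> ` V"
  shows "vp u v"
proof -
  have c: "col V E L \<sigma>" and uv: "u \<noteq> v" "u \<in> V" "v \<in> V" using s unfolding inS_def by auto
  let ?R = "V - {u, v}"
  have "col ?R E (L - {\<sigma> u, b}) (restrict \<sigma> ?R)"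
  proof (rule colI)
    fix w assume w: "w \<in> ?R"
    then have "\<sigma> w \<noteq> \<sigma> u" using s unfolding inS_def by auto
    moreover have "\<sigma> w \<noteq> b" using b w by auto
    ultimately show "restrict \<sigma> ?R w \<in> L - {\<sigma> u, b}" using w col_in[OF c, of w] by auto
  next
    fix x y assume "x \<in> ?R" "y \<in> ?R" "{x, y} \<in> E"
    then show "restrict \<sigma> ?R x \<noteq> restrict \<sigma> ?R y" using col_adj[OF c, of x y] by auto
  qed auto
  then have c1: "chromatic_number ?R E \<le> card (L - {\<sigma> u, b})" using chi_le[of ?R E "L - {\<sigma> u, b}"] fL by simp
  have ub: "\<sigma> u \<noteq> b" "\<sigma> u \<in> L" using b uv col_in[OF c] by auto
  have sub: "{\<sigma> u, b} \<subseteq> L" using ub b by auto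
  have c2: "card {\<sigma> u, b} = 2" using ub by simp
  have "card (L - {\<sigma> u, b}) = card L - 2" using card_Diff_subset[OF _ sub] c2 by simp
  moreover have "card L \<ge> 2" using card_mono[OF fL sub] c2 by simp
  ultimately have "chromatic_number ?R E + 2 \<le> card L" using c1 by linarith
  then show ?thesis unfolding vp_def using uv inS_nonadj[OF s] by auto
qed

lemma vp_L2: "vp u v \<Longrightarrow> \<exists>a b. a \<in> L \<and> b \<in> L \<and> a \<noteq> b"
proof -
  assume "vp u v"
  then have c: "card L \<ge> 2" unfolding vp_def by auto
  then have "L \<noteq> {}" by auto
  then obtain a where a: "a \<in> L" by auto
  have "card (L - {a}) \<ge> 1" using c a fL by simp
  then have "L - {a} \<noteq> {}" by (metis card.empty not_one_le_zero)
  then obtain b where "b \<in> L - {a}" by auto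
  then show ?thesis using a by blast
qed

lemma chi_sub2:
  assumes "vp u v" "{u, v} \<subseteq> P" "P \<subseteq> V"
  shows "chromatic_number (V - P) E \<le> chromatic_number (V - {u, v}) E"
  using chi_mono[of "V - {u, v}" E "V - P"] fin lp assms by auto

lemma pair_noedge: "x \<in> {p, q} \<Longrightarrow> y \<in> {p, q} \<Longrightarrow> {x, y} \<in> E \<Longrightarrow> {p, q} \<notin> E \<Longrightarrow> False"
  using lp unfolding loopless_def by (auto simp: insert_commute)

lemma link_disj:
  assumes p1: "vp u1 v1" and p2: "vp u2 v2" and d: "{u1, v1} \<inter> {u2, v2} = {}"
  shows "\<exists>\<rho>. inS V E L u1 v1 \<rho> \<and> inS V E L u2 v2 \<rho>"
proof -
  obtain a b where ab: "a \<in> L" "b \<in> L" "a \<noteq> b" using vp_L2[OF p1] by blast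
  let ?P = "{u1, v1, u2, v2}"
  let ?g = "\<lambda>w. if w = u1 \<or> w = v1 then a else b"
  have PV: "?P \<subseteq> V" using p1 p2 unfolding vp_def by auto
  have lp': "\<And>x. {x} \<notin> E" using lp unfolding loopless_def by auto
  have ch: "chromatic_number (V - ?P) E \<le> card (L - {a, b})"
  proof -
    have "chromatic_number (V - ?P) E \<le> chromatic_number (V - {u1, v1}) E" using chi_sub2[OF p1 _ PV] by auto
    moreover have "card (L - {a, b}) = card L - 2" using ab fL by (simp add: card_Diff_subset)
    ultimately show ?thesis using p1 unfolding vp_def by linarith
  qed
  have n1: "{u1, v1} \<notin> E" using p1 unfolding vp_def by auto
  have n2: "{u2, v2} \<notin> E" using p2 unfolding vp_def by auto
  have gp: "?g x \<noteq> ?g y" if xy: "x \<in> ?P" "y \<in> ?P" "{x, y} \<in> E" for x y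
  proof (cases "x \<in> {u1, v1}")
    case True
    show ?thesis
    proof (cases "y \<in> {u1, v1}")
      case True
      then show ?thesis using pair_noedge[OF \<open>x \<in> {u1, v1}\<close> True xy(3) n1] by blast
    next
      case False
      then show ?thesis using \<open>x \<in> {u1, v1}\<close> ab(3) by auto
    qed
  next
    case False
    then have x2: "x \<in> {u2, v2}" using xy(1) by auto
    show ?thesis
    proof (cases "y \<in> {u1, v1}")
      case True
      then show ?thesis using False ab(3) by auto
    next
      case F2: False
      then have "y \<in> {u2, v2}" using xy(2) by auto
      then show ?thesis using pair_noedge[OF x2 _ xy(3) n2] by blast
    qed
  qed
  obtain \<rho> where r: "col V E L \<rho>" "\<forall>w\<in>?P. \<rho> w = ?g w" "\<forall>w\<in>V - ?P. \<rho> w \<in> L - {a, b}"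
  proof -
    have gL: "\<And>w. w \<in> ?P \<Longrightarrow> ?g w \<in> {a, b}" by auto
    have sub: "{a, b} \<subseteq> L" using ab by auto
    have "\<exists>\<rho>. col V E L \<rho> \<and> (\<forall>w\<in>?P. \<rho> w = ?g w) \<and> (\<forall>w\<in>V - ?P. \<rho> w \<in> L - {a, b})"
      by (rule build[OF fin lp fL PV gL sub gp ch])
    then obtain \<rho> where "col V E L \<rho>" "\<forall>w\<in>?P. \<rho> w = ?g w" "\<forall>w\<in>V - ?P. \<rho> w \<in> L - {a, b}"
      by (elim exE conjE)
    then show ?thesis by (rule that)
  qed
  have u1: "u1 \<noteq> v1" "u1 \<in> V" "v1 \<in> V" using p1 unfolding vp_def by auto
  have u2: "u2 \<noteq> v2" "u2 \<in> V" "v2 \<in> V" using p2 unfolding vp_def by auto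
  have dd: "u2 \<noteq> u1" "u2 \<noteq> v1" "v2 \<noteq> u1" "v2 \<noteq> v1" using d by auto
  have ra: "\<rho> u1 = a" "\<rho> v1 = a" "\<rho> u2 = b" "\<rho> v2 = b" using r(2) dd by auto
  have "inS V E L u1 v1 \<rho>" unfolding inS_def
  proof (intro conjI ballI impI)
    fix w assume "w \<in> V" "\<rho> w = \<rho> u1"
    then show "w = u1 \<or> w = v1" using r(2,3) ra ab(3) by (cases "w \<in> ?P") auto
  qed (use r(1) u1 ra in auto)
  moreover have "inS V E L u2 v2 \<rho>" unfolding inS_def
  proof (intro conjI ballI impI)
    fix w assume "w \<in> V" "\<rho> w = \<rho> u2"
    then show "w = u2 \<or> w = v2" using r(2,3) ra ab(3) by (cases "w \<in> ?P") auto
  qed (use r(1) u2 ra in auto)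
  ultimately show ?thesis by blast
qed

lemma link_share:
  assumes p1: "vp u v1" and p2: "vp u v2" and d: "v1 \<noteq> v2"
  shows "\<exists>\<rho> \<rho>'. inS V E L u v1 \<rho> \<and> inS V E L u v2 \<rho>' \<and> reach V E L \<rho> \<rho>'"
proof -
  obtain a b where ab: "a \<in> L" "b \<in> L" "a \<noteq> b" using vp_L2[OF p1] by blast
  let ?P = "{u, v1, v2}"
  let ?g = "\<lambda>w. if w = v2 then b else a"
  have PV: "?P \<subseteq> V" using p1 p2 unfolding vp_def by auto
  have lp': "\<And>x. {x} \<notin> E" using lp unfolding loopless_def by auto
  have uv: "u \<noteq> v1" "u \<noteq> v2" using p1 p2 unfolding vp_def by auto
  have ch: "chromatic_number (V - ?P) E \<le> card (L - {a, b})"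
  proof -
    have "chromatic_number (V - ?P) E \<le> chromatic_number (V - {u, v1}) E" using chi_sub2[OF p1 _ PV] by auto
    moreover have "card (L - {a, b}) = card L - 2" using ab fL by (simp add: card_Diff_subset)
    ultimately show ?thesis using p1 unfolding vp_def by linarith
  qed
  have n1: "{u, v1} \<notin> E" "{v1, u} \<notin> E" using p1 unfolding vp_def by (auto simp: insert_commute)
  have n2: "{u, v2} \<notin> E" "{v2, u} \<notin> E" using p2 unfolding vp_def by (auto simp: insert_commute)
  have gp: "?g x \<noteq> ?g y" if "x \<in> ?P" "y \<in> ?P" "{x, y} \<in> E" for x y
    using that n1 n2 lp' d uv ab(3) by auto
  obtain \<rho> where r: "col V E L \<rho>" "\<forall>w\<in>?P. \<rho> w = ?g w" "\<forall>w\<in>V - ?P. \<rho> w \<in> L - {a, b}"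
  proof -
    have gL: "\<And>w. w \<in> ?P \<Longrightarrow> ?g w \<in> {a, b}" by auto
    have sub: "{a, b} \<subseteq> L" using ab by auto
    have "\<exists>\<rho>. col V E L \<rho> \<and> (\<forall>w\<in>?P. \<rho> w = ?g w) \<and> (\<forall>w\<in>V - ?P. \<rho> w \<in> L - {a, b})"
      by (rule build[OF fin lp fL PV gL sub gp ch])
    then obtain \<rho> where "col V E L \<rho>" "\<forall>w\<in>?P. \<rho> w = ?g w" "\<forall>w\<in>V - ?P. \<rho> w \<in> L - {a, b}"
      by (elim exE conjE)
    then show ?thesis by (rule that)
  qed
  have s1: "inS V E L u v1 \<rho>" unfolding inS_def using r p1 d uv ab(3) unfolding vp_def by auto
  have nb: "\<rho> w \<noteq> b" if "w \<in> V" "{u, w} \<in> E" for w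
  proof -
    have "w \<noteq> v2" using that n2 by auto
    moreover have "w \<noteq> u" using that lp' by auto
    ultimately show ?thesis using r that d ab(3) by (cases "w = v1") auto
  qed
  have st: "reach V E L \<rho> (\<rho>(u := b))" using reach_upd[OF r(1) _ ab(2)] nb PV by auto
  have c': "col V E L (\<rho>(u := b))" using reach_col[OF st r(1)] .
  have s2: "inS V E L u v2 (\<rho>(u := b))" unfolding inS_def using c' r p2 d uv ab(3) unfolding vp_def by auto
  show ?thesis using s1 s2 st by blast
qed

lemma good_conn:
  assumes IH: "\<And>R L'. R \<subseteq> V \<Longrightarrow> R \<noteq> V \<Longrightarrow> finite L' \<Longrightarrow> chromatic_number R E + 1 \<le> card L' \<Longrightarrow> conn R E L'"
    and g1: "good V E L \<sigma>1" and g2: "good V E L \<sigma>2"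
  shows "reach V E L \<sigma>1 \<sigma>2"
proof -
  obtain u1 v1 b1 where s1: "inS V E L u1 v1 \<sigma>1" and b1: "b1 \<in> L" "b1 \<notin> \<sigma>1 ` V" using g1 unfolding good_def by blast
  obtain u2 v2 b2 where s2: "inS V E L u2 v2 \<sigma>2" and b2: "b2 \<in> L" "b2 \<notin> \<sigma>2 ` V" using g2 unfolding good_def by blast
  have p1: "vp u1 v1" using good_vp[OF s1 b1] .
  have p2: "vp u2 v2" using good_vp[OF s2 b2] .
  have Sc: "reach V E L \<rho> \<rho>'" if p: "vp u v" and r: "inS V E L u v \<rho>" "inS V E L u v \<rho>'" for u v \<rho> \<rho>'
  proof (rule S_conn)
    show "u \<noteq> v" "u \<in> V" "v \<in> V" "{u, v} \<notin> E" "chromatic_number (V - {u, v}) E + 2 \<le> card L"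
      using p unfolding vp_def by auto
    show "conn (V - {u, v}) E L'" if "finite L'" "chromatic_number (V - {u, v}) E + 1 \<le> card L'" for L'
      using IH[OF _ _ that] p unfolding vp_def by auto
  qed (use r in auto)
  have main: "\<exists>\<rho> \<rho>'. inS V E L u1 v1 \<rho> \<and> inS V E L u2 v2 \<rho>' \<and> reach V E L \<rho> \<rho>'"
  proof (cases "{u1, v1} \<inter> {u2, v2} = {}")
    case True
    then show ?thesis using link_disj[OF p1 p2] by blast
  next
    case False
    have d1: "u1 \<noteq> v1" and d2: "u2 \<noteq> v2" using p1 p2 unfolding vp_def by auto
    show ?thesis
    proof (cases "{u1, v1} = {u2, v2}")
      case True
      then have "(u1 = u2 \<and> v1 = v2) \<or> (u1 = v2 \<and> v1 = u2)" using d1 d2 by (metis doubleton_eq_iff)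
      then have "inS V E L u1 v1 \<sigma>2" using s2 inS_sym by metis
      then show ?thesis using s1 s2 by blast
    next
      case F2: False
      have "(u1 = u2 \<and> v1 \<noteq> v2) \<or> (u1 = v2 \<and> v1 \<noteq> u2) \<or> (v1 = u2 \<and> u1 \<noteq> v2) \<or> (v1 = v2 \<and> u1 \<noteq> u2)"
        using False F2 d1 d2 by auto
      then show ?thesis
      proof (elim disjE conjE)
        assume "u1 = u2" "v1 \<noteq> v2"
        then show ?thesis using link_share[OF p1, of v2] p2 by auto
      next
        assume h: "u1 = v2" "v1 \<noteq> u2"
        have "vp u1 u2" using p2 h vp_sym by metis
        then obtain \<rho> \<rho>' where "inS V E L u1 v1 \<rho>" "inS V E L u1 u2 \<rho>'" "reach V E L \<rho> \<rho>'"
          using link_share[OF p1, of u2] h by blast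
        then show ?thesis using h inS_sym by metis
      next
        assume h: "v1 = u2" "u1 \<noteq> v2"
        have q1: "vp v1 u1" using p1 vp_sym by metis
        obtain \<rho> \<rho>' where "inS V E L v1 u1 \<rho>" "inS V E L v1 v2 \<rho>'" "reach V E L \<rho> \<rho>'"
          using link_share[OF q1, of v2] p2 h by blast
        then show ?thesis using h inS_sym by metis
      next
        assume h: "v1 = v2" "u1 \<noteq> u2"
        have q1: "vp v1 u1" using p1 vp_sym by metis
        have q2: "vp v1 u2" using p2 h vp_sym by metis
        obtain \<rho> \<rho>' where "inS V E L v1 u1 \<rho>" "inS V E L v1 u2 \<rho>'" "reach V E L \<rho> \<rho>'"
          using link_share[OF q1 q2] h by blast
        then show ?thesis using h inS_sym by metis
      qed
    qed
  qed
  then obtain \<rho> \<rho>' where r: "inS V E L u1 v1 \<rho>" "inS V E L u2 v2 \<rho>'" "reach V E L \<rho> \<rho>'" by blast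
  have "reach V E L \<sigma>1 \<rho>" using Sc[OF p1 s1 r(1)] .
  moreover have "reach V E L \<rho>' \<sigma>2" using Sc[OF p2 r(2) s2] .
  ultimately show ?thesis using r(3) by (meson rtranclp_trans)
qed

end

lemma c5: "(i::nat) < 5 \<Longrightarrow> i = 0 \<or> i = 1 \<or> i = 2 \<or> i = 3 \<or> i = 4" by linarith

lemma nn3: "i < 5 \<Longrightarrow> j < 5 \<Longrightarrow> k < 5 \<Longrightarrow> \<not> near i j \<Longrightarrow> \<not> near j k \<Longrightarrow> \<not> near i k \<Longrightarrow> False"
  apply (drule c5)+ unfolding near_def by (elim disjE; simp)

lemma pairK: "j < 5 \<Longrightarrow> k < 5 \<Longrightarrow> k' < 5 \<Longrightarrow> k \<noteq> j \<Longrightarrow> k \<noteq> (j+1) mod 5 \<Longrightarrow> k' \<noteq> j \<Longrightarrow> k' \<noteq> (j+1) mod 5 \<Longrightarrow>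
   \<not> near k k' \<Longrightarrow> (k = (j+2) mod 5 \<and> k' = (j+4) mod 5) \<or> (k = (j+4) mod 5 \<and> k' = (j+2) mod 5)"
  apply (drule c5)+ unfolding near_def by (elim disjE; simp)

lemma pairK2: "j < 5 \<Longrightarrow> k < 5 \<Longrightarrow> k' < 5 \<Longrightarrow> k \<noteq> j \<Longrightarrow> k \<noteq> (j+4) mod 5 \<Longrightarrow> k' \<noteq> j \<Longrightarrow> k' \<noteq> (j+4) mod 5 \<Longrightarrow>
   \<not> near k k' \<Longrightarrow> (k = (j+1) mod 5 \<and> k' = (j+3) mod 5) \<or> (k = (j+3) mod 5 \<and> k' = (j+1) mod 5)"
  apply (drule c5)+ unfolding near_def by (elim disjE; simp)

lemma near2: "k < 5 \<Longrightarrow> j < 5 \<Longrightarrow> near k j \<Longrightarrow> near k ((j+1) mod 5) \<Longrightarrow> k = j \<or> k = (j+1) mod 5"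
  apply (drule c5)+ unfolding near_def by (elim disjE; simp)

lemma sameidx: "i < 5 \<Longrightarrow> k < 5 \<Longrightarrow> near i k \<Longrightarrow> k \<noteq> (i+1) mod 5 \<Longrightarrow> i \<noteq> (k+1) mod 5 \<Longrightarrow> i = k"
  unfolding near_def by auto

lemma nearfacts: "j < 5 \<Longrightarrow> near j ((j+1) mod 5) \<and> near ((j+4) mod 5) j \<and>
   \<not> near ((j+2) mod 5) j \<and> \<not> near ((j+1) mod 5) ((j+4) mod 5) \<and> \<not> near j ((j+3) mod 5) \<and>
   \<not> near ((j+1) mod 5) ((j+3) mod 5) \<and> \<not> near ((j+2) mod 5) ((j+4) mod 5) \<and> \<not> near j ((j+2) mod 5) \<and>
   \<not> near ((j+4) mod 5) ((j+1) mod 5) \<and> \<not> near ((j+3) mod 5) j \<and> \<not> near ((j+4) mod 5) ((j+2) mod 5) \<and>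
   \<not> near ((j+3) mod 5) ((j+1) mod 5)"
  apply (drule c5) unfolding near_def by (elim disjE; simp)

lemma near_refl: "near i i" unfolding near_def by simp

lemma card_ge3:
  assumes "finite S" "card S \<ge> 3"
  shows "\<exists>x y z. x \<in> S \<and> y \<in> S \<and> z \<in> S \<and> x \<noteq> y \<and> y \<noteq> z \<and> x \<noteq> z"
proof -
  obtain x where x: "x \<in> S" using assms by fastforce
  have "card (S - {x}) \<ge> 2" using assms x by simp
  then have "S - {x} \<noteq> {}" by (metis card.empty not_numeral_le_zero)
  then obtain y where y: "y \<in> S - {x}" by blast
  have "card (S - {x} - {y}) \<ge> 1" using assms x y by (simp add: card_Diff_singleton_if)
  then obtain z where z: "z \<in> S - {x} - {y}" by (metis card.empty ex_in_conv not_one_le_zero)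
  show ?thesis using x y z by blast
qed

context
  fixes V :: "'a set" and E :: "'a set set" and L :: "nat set" and q :: "'a \<Rightarrow> nat"
  assumes fin: "finite V" and lp: "loopless E" and fL: "finite L"
    and cL: "chromatic_number V E + 1 \<le> card L"
    and qlt: "\<And>v. v \<in> V \<Longrightarrow> q v < 5"
    and qadj: "\<And>x y. x \<in> V \<Longrightarrow> y \<in> V \<Longrightarrow> x \<noteq> y \<Longrightarrow> ({x, y} \<in> E) = near (q x) (q y)"
    and ncl: "\<exists>x\<in>V. \<exists>y\<in>V. x \<noteq> y \<and> {x, y} \<notin> E"
begin

lemma indep3: "x \<in> V \<Longrightarrow> y \<in> V \<Longrightarrow> z \<in> V \<Longrightarrow> x \<noteq> y \<Longrightarrow> y \<noteq> z \<Longrightarrow> x \<noteq> z \<Longrightarrow>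
   {x, y} \<notin> E \<Longrightarrow> {y, z} \<notin> E \<Longrightarrow> {x, z} \<notin> E \<Longrightarrow> False"
  using nn3[of "q x" "q y" "q z"] qlt qadj by metis

lemma class_le2:
  assumes b: "col V E L' \<beta>"
  shows "card {v\<in>V. \<beta> v = c} \<le> 2"
proof (rule ccontr)
  assume "\<not> ?thesis"
  then have "card {v\<in>V. \<beta> v = c} \<ge> 3" by simp
  then obtain x y z where xyz: "x \<in> {v\<in>V. \<beta> v = c}" "y \<in> {v\<in>V. \<beta> v = c}" "z \<in> {v\<in>V. \<beta> v = c}"
    "x \<noteq> y" "y \<noteq> z" "x \<noteq> z"
    using card_ge3[of "{v\<in>V. \<beta> v = c}"] fin by auto
  have m: "x \<in> V" "y \<in> V" "z \<in> V" "\<beta> x = c" "\<beta> y = c" "\<beta> z = c" using xyz(1-3) by auto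
  have "{x, y} \<notin> E" using col_adj[OF b m(1,2)] m by auto
  moreover have "{y, z} \<notin> E" using col_adj[OF b m(2,3)] m by auto
  moreover have "{x, z} \<notin> E" using col_adj[OF b m(1,3)] m by auto
  ultimately show False using indep3[OF m(1-3) xyz(4-6)] by blast
qed

lemma three_same: "col V E L' \<beta> \<Longrightarrow> x \<in> V \<Longrightarrow> y \<in> V \<Longrightarrow> z \<in> V \<Longrightarrow> \<beta> x = \<beta> y \<Longrightarrow> \<beta> y = \<beta> z \<Longrightarrow>
    x = y \<or> y = z \<or> x = z"
  using indep3[of x y z] col_adj by metis

lemma Kcl:
  assumes "j < 5" "x \<in> V" "y \<in> V" "x \<noteq> y" "q x = j \<or> q x = (j+1) mod 5" "q y = j \<or> q y = (j+1) mod 5"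
  shows "{x, y} \<in> E"
proof -
  have n: "near j ((j+1) mod 5)" "near ((j+1) mod 5) j" using nearfacts[OF assms(1)] unfolding near_def by auto
  show ?thesis using qadj[OF assms(2,3,4)] assms(5,6) n near_refl by auto
qed

lemma avoid:
  assumes a: "col V E L \<alpha>" and K: "K \<subseteq> V" "\<And>x y. x \<in> K \<Longrightarrow> y \<in> K \<Longrightarrow> x \<noteq> y \<Longrightarrow> {x, y} \<in> E"
  shows "\<exists>c\<in>L. c \<notin> \<alpha> ` K"
proof (rule ccontr)
  assume "\<not> ?thesis"
  then have "L \<subseteq> \<alpha> ` K" by auto
  then have "card L \<le> card (\<alpha> ` K)" using card_mono fin K(1) finite_subset by (metis finite_imageI)
  also have "\<dots> \<le> card K" using card_image_le fin K(1) finite_subset by blast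
  also have "\<dots> \<le> chromatic_number V E" using clique_card_chi[OF fin lp K] .
  finally show False using cL by simp
qed

lemma count2:
  assumes a: "col V E L \<alpha>" and allU: "\<forall>b\<in>L. b \<in> \<alpha> ` V"
    and S1: "\<forall>x\<in>{x\<in>V. \<forall>y\<in>V. \<alpha> y = \<alpha> x \<longrightarrow> y = x}. \<forall>y\<in>{x\<in>V. \<forall>y\<in>V. \<alpha> y = \<alpha> x \<longrightarrow> y = x}. x = y"
  shows False
proof -
  define Sng where "Sng = {x\<in>V. \<forall>y\<in>V. \<alpha> y = \<alpha> x \<longrightarrow> y = x}"
  define cl where "cl c = {v\<in>V. \<alpha> v = c}" for c
  have S1': "\<And>x y. x \<in> Sng \<Longrightarrow> y \<in> Sng \<Longrightarrow> x = y" using S1 unfolding Sng_def by blast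
  have Lne: "L \<noteq> {}" using cL by auto
  have finC: "finite (cl c)" for c using fin unfolding cl_def by auto
  have V_eq: "V = (\<Union>c\<in>L. cl c)" using col_in[OF a] unfolding cl_def by auto
  have cardV: "card V = (\<Sum>c\<in>L. card (cl c))"
    unfolding V_eq by (rule card_UN_disjoint[OF fL]) (use finC in \<open>auto simp: cl_def\<close>)
  obtain a0 where a0: "a0 \<in> L" "\<forall>c\<in>L - {a0}. \<alpha> ` Sng \<inter> {c} = {}"
  proof (cases "Sng = {}")
    case True then show ?thesis using that Lne by auto
  next
    case False
    then obtain x0 where x0: "x0 \<in> Sng" by auto
    then have "Sng = {x0}" using S1' by auto
    moreover have "\<alpha> x0 \<in> L" using x0 col_in[OF a] unfolding Sng_def by auto
    ultimately show ?thesis using that by auto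
  qed
  have two: "card (cl c) \<ge> 2" if c: "c \<in> L - {a0}" for c
  proof -
    obtain v where v: "v \<in> V" "\<alpha> v = c" using allU c by auto
    have "v \<notin> Sng" using a0(2) c v by auto
    then obtain w where w: "w \<in> V" "\<alpha> w = \<alpha> v" "w \<noteq> v" using v unfolding Sng_def by auto
    have "{v, w} \<subseteq> cl c" using v w unfolding cl_def by auto
    then have "card {v, w} \<le> card (cl c)" using card_mono[OF finC] by blast
    then show ?thesis using w(3) by simp
  qed
  have one: "card (cl a0) \<ge> 1"
  proof -
    obtain v where v: "v \<in> V" "\<alpha> v = a0" using allU a0 by auto
    then have "cl a0 \<noteq> {}" unfolding cl_def by auto
    then show ?thesis using finC by (simp add: Suc_leI card_gt_0_iff)
  qed
  have "(\<Sum>c\<in>L. card (cl c)) = card (cl a0) + (\<Sum>c\<in>L - {a0}. card (cl c))"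
    using sum.remove[OF fL a0(1)] by simp
  moreover have "(\<Sum>c\<in>L - {a0}. card (cl c)) \<ge> (\<Sum>c\<in>L - {a0}. 2)" using two by (intro sum_mono) auto
  moreover have "(\<Sum>c\<in>L - {a0}. (2::nat)) = 2 * (card L - 1)" using a0(1) fL by simp
  ultimately have lo: "card V \<ge> 2 * (card L - 1) + 1" using one cardV by linarith
  let ?k = "chromatic_number V E"
  obtain \<gamma> where g: "col V E {1..?k} \<gamma>" using chi_col[OF fin lp] by blast
  have V_eq2: "V = (\<Union>c\<in>{1..?k}. {v\<in>V. \<gamma> v = c})" using col_in[OF g] by auto
  have "card V \<le> (\<Sum>c\<in>{1..?k}. card {v\<in>V. \<gamma> v = c})"
    by (subst V_eq2) (rule card_UN_le, simp)
  also have "\<dots> \<le> (\<Sum>c\<in>{1..?k}. 2)" using class_le2[OF g] by (intro sum_mono) auto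
  also have "\<dots> = 2 * ?k" by simp
  finally have "card V \<le> 2 * ?k" .
  then show False using lo cL by linarith
qed

lemma reach_good:
  assumes a: "col V E L \<alpha>"
  shows "\<exists>\<sigma>. reach V E L \<alpha> \<sigma> \<and> good V E L \<sigma>"
proof (cases "\<exists>b\<in>L. b \<notin> \<alpha> ` V")
  case True
  then obtain b where b: "b \<in> L" "b \<notin> \<alpha> ` V" by blast
  show ?thesis
  proof (cases "\<exists>u\<in>V. \<exists>v\<in>V. u \<noteq> v \<and> \<alpha> u = \<alpha> v")
    case True
    then obtain u v where uv: "u \<in> V" "v \<in> V" "u \<noteq> v" "\<alpha> u = \<alpha> v" by blast
    have "inS V E L u v \<alpha>" unfolding inS_def
    proof (intro conjI ballI impI)
      fix w assume "w \<in> V" "\<alpha> w = \<alpha> u"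
      then show "w = u \<or> w = v" using three_same[OF a uv(1) uv(2) \<open>w \<in> V\<close>] uv by metis
    qed (use a uv in auto)
    then have "good V E L \<alpha>" unfolding good_def using b by blast
    then show ?thesis by blast
  next
    case False
    then have inj: "\<And>u v. u \<in> V \<Longrightarrow> v \<in> V \<Longrightarrow> \<alpha> u = \<alpha> v \<Longrightarrow> u = v" by blast
    obtain x y where xy: "x \<in> V" "y \<in> V" "x \<noteq> y" "{x, y} \<notin> E" using ncl by blast
    have yL: "\<alpha> y \<in> L" using col_in[OF a xy(2)] .
    have r: "reach V E L \<alpha> (\<alpha>(x := \<alpha> y))"
    proof (rule reach_upd[OF a xy(1) yL])
      fix w assume "w \<in> V" "{x, w} \<in> E"
      then show "\<alpha> w \<noteq> \<alpha> y" using inj[of w y] xy by auto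
    qed
    have c: "col V E L (\<alpha>(x := \<alpha> y))" using reach_col[OF r a] .
    have "inS V E L x y (\<alpha>(x := \<alpha> y))" unfolding inS_def
    proof (intro conjI ballI impI)
      fix w assume "w \<in> V" "(\<alpha>(x := \<alpha> y)) w = (\<alpha>(x := \<alpha> y)) x"
      then show "w = x \<or> w = y" using inj[of w y] xy by (cases "w = x") auto
    qed (use c xy in auto)
    moreover have "b \<notin> (\<alpha>(x := \<alpha> y)) ` V" using b xy(2) by auto
    ultimately have "good V E L (\<alpha>(x := \<alpha> y))" unfolding good_def using b(1) by blast
    then show ?thesis using r by blast
  qed
next
  case False
  then have allU: "\<forall>b\<in>L. b \<in> \<alpha> ` V" by blast
  define Sng where "Sng = {x\<in>V. \<forall>y\<in>V. \<alpha> y = \<alpha> x \<longrightarrow> y = x}"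
  have SngV: "Sng \<subseteq> V" unfolding Sng_def by auto
  have sng: "\<And>x y. x \<in> Sng \<Longrightarrow> y \<in> V \<Longrightarrow> \<alpha> y = \<alpha> x \<Longrightarrow> y = x" unfolding Sng_def by auto
  have partner: "\<And>v. v \<in> V \<Longrightarrow> v \<notin> Sng \<Longrightarrow> \<exists>w\<in>V. w \<noteq> v \<and> \<alpha> w = \<alpha> v" unfolding Sng_def by auto
  show ?thesis
  proof (cases "\<exists>x\<in>Sng. \<exists>y\<in>Sng. x \<noteq> y \<and> {x, y} \<notin> E")
    case True
    then obtain x y where xy: "x \<in> Sng" "y \<in> Sng" "x \<noteq> y" "{x, y} \<notin> E" by blast
    have xyV: "x \<in> V" "y \<in> V" using xy SngV by auto
    have yL: "\<alpha> y \<in> L" using col_in[OF a xyV(2)] .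
    have r: "reach V E L \<alpha> (\<alpha>(x := \<alpha> y))"
    proof (rule reach_upd[OF a xyV(1) yL])
      fix w assume "w \<in> V" "{x, w} \<in> E"
      then show "\<alpha> w \<noteq> \<alpha> y" using sng[OF xy(2), of w] xy by auto
    qed
    have c: "col V E L (\<alpha>(x := \<alpha> y))" using reach_col[OF r a] .
    have "inS V E L x y (\<alpha>(x := \<alpha> y))" unfolding inS_def
    proof (intro conjI ballI impI)
      fix w assume "w \<in> V" "(\<alpha>(x := \<alpha> y)) w = (\<alpha>(x := \<alpha> y)) x"
      then show "w = x \<or> w = y" using sng[OF xy(2), of w] xy by (cases "w = x") auto
    qed (use c xy xyV in auto)
    moreover have "\<alpha> x \<notin> (\<alpha>(x := \<alpha> y)) ` V"
    proof
      assume "\<alpha> x \<in> (\<alpha>(x := \<alpha> y)) ` V"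
      then obtain w where w: "w \<in> V" "(\<alpha>(x := \<alpha> y)) w = \<alpha> x" by auto
      show False
      proof (cases "w = x")
        case True then show False using w sng[OF xy(1) xyV(2)] xy(3) by auto
      next
        case False then show False using w sng[OF xy(1), of w] by auto
      qed
    qed
    moreover have "\<alpha> x \<in> L" using col_in[OF a xyV(1)] .
    ultimately have "good V E L (\<alpha>(x := \<alpha> y))" unfolding good_def by blast
    then show ?thesis using r by blast
  next
    case False
    then have Scl: "\<And>x y. x \<in> Sng \<Longrightarrow> y \<in> Sng \<Longrightarrow> x \<noteq> y \<Longrightarrow> {x, y} \<in> E" by blast
    have Sidx: "\<And>x y. x \<in> Sng \<Longrightarrow> y \<in> Sng \<Longrightarrow> near (q x) (q y)"
    proof -
      fix x y assume "x \<in> Sng" "y \<in> Sng"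
      then show "near (q x) (q y)" using Scl[of x y] qadj[of x y] SngV near_refl by (cases "x = y") auto
    qed
    have Kc: "{x, y} \<in> E" if "j < 5" "x \<in> V" "y \<in> V" "x \<noteq> y" "q x = j \<or> q x = (j+1) mod 5" "q y = j \<or> q y = (j+1) mod 5" for j x y
      using Kcl[OF that] .
    have findpair: "\<exists>c d. c \<in> V \<and> d \<in> V \<and> c \<noteq> d \<and> \<alpha> c = \<alpha> d \<and> \<alpha> c \<in> L \<and>
        (\<forall>v\<in>V. q v = j \<or> q v = (j+1) mod 5 \<longrightarrow> \<alpha> v \<noteq> \<alpha> c) \<and>
        q c = (j+2) mod 5 \<and> q d = (j+4) mod 5"
      if j: "j < 5" and SK: "\<And>s. s \<in> Sng \<Longrightarrow> q s = j \<or> q s = (j+1) mod 5" for j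
    proof -
      let ?K = "{v\<in>V. q v = j \<or> q v = (j+1) mod 5}"
      have Kcj: "\<And>x y. x \<in> ?K \<Longrightarrow> y \<in> ?K \<Longrightarrow> x \<noteq> y \<Longrightarrow> {x, y} \<in> E"
      proof -
        fix x y assume "x \<in> ?K" "y \<in> ?K" "x \<noteq> y"
        then show "{x, y} \<in> E" using Kc[OF j, of x y] by simp
      qed
      have "?K \<subseteq> V" by auto
      from avoid[OF a this Kcj] obtain c0 where c0: "c0 \<in> L" "c0 \<notin> \<alpha> ` ?K" by blast
      obtain c where c: "c \<in> V" "\<alpha> c = c0" using allU c0 by auto
      have cK: "c \<notin> ?K" using c c0 by auto
      then have "c \<notin> Sng" using SK c by auto
      then obtain d where d: "d \<in> V" "d \<noteq> c" "\<alpha> d = \<alpha> c" using partner[OF c(1)] by auto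
      have dK: "d \<notin> ?K" using d c c0 by auto
      have "{c, d} \<notin> E" using col_adj[OF a c(1) d(1)] d by auto
      moreover have "c \<noteq> d" using d(2) by auto
      ultimately have nn: "\<not> near (q c) (q d)" using qadj[OF c(1) d(1)] by simp
      have qc: "q c \<noteq> j" "q c \<noteq> (j+1) mod 5" using cK c(1) by auto
      have qd: "q d \<noteq> j" "q d \<noteq> (j+1) mod 5" using dK d(1) by auto
      have "(q c = (j+2) mod 5 \<and> q d = (j+4) mod 5) \<or> (q c = (j+4) mod 5 \<and> q d = (j+2) mod 5)"
        by (rule pairK[OF j qlt[OF c(1)] qlt[OF d(1)] qc qd nn])
      moreover have nK: "\<forall>v\<in>V. q v = j \<or> q v = (j+1) mod 5 \<longrightarrow> \<alpha> v \<noteq> \<alpha> c"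
      proof (intro ballI impI notI)
        fix v assume v: "v \<in> V" "q v = j \<or> q v = (j+1) mod 5" "\<alpha> v = \<alpha> c"
        then have "v \<in> ?K" by simp
        then have "\<alpha> v \<in> \<alpha> ` ?K" by (rule imageI)
        then show False using c0(2) c(2) v(3) by simp
      qed
      moreover have cL0: "\<alpha> c \<in> L" using c c0 by simp
      ultimately show ?thesis
      proof (elim disjE conjE)
        assume h: "q c = (j+2) mod 5" "q d = (j+4) mod 5"
        show ?thesis using h c(1) d cL0 nK by (intro exI[of _ c] exI[of _ d] conjI) auto
      next
        assume h: "q c = (j+4) mod 5" "q d = (j+2) mod 5"
        have "\<forall>v\<in>V. q v = j \<or> q v = (j+1) mod 5 \<longrightarrow> \<alpha> v \<noteq> \<alpha> d" using nK d by simp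
        moreover have "d \<noteq> c" "\<alpha> d = \<alpha> c" using d by auto
        ultimately show ?thesis using h c(1) d(1) cL0
          by (intro exI[of _ d] exI[of _ c] conjI) auto
      qed
    qed
    show ?thesis
    proof (cases "\<exists>x\<in>Sng. \<exists>y\<in>Sng. q y = (q x + 1) mod 5")
      case True
      then obtain x y where xy: "x \<in> Sng" "y \<in> Sng" "q y = (q x + 1) mod 5" by blast
      define j where "j = q x"
      have xyV: "x \<in> V" "y \<in> V" using xy SngV by auto
      have j: "j < 5" using qlt[OF xyV(1)] unfolding j_def .
      have nf: "near j ((j+1) mod 5) \<and> near ((j+4) mod 5) j \<and>
        \<not> near ((j+2) mod 5) j \<and> \<not> near ((j+1) mod 5) ((j+4) mod 5) \<and> \<not> near j ((j+3) mod 5) \<and>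
        \<not> near ((j+1) mod 5) ((j+3) mod 5) \<and> \<not> near ((j+2) mod 5) ((j+4) mod 5) \<and> \<not> near j ((j+2) mod 5) \<and>
        \<not> near ((j+4) mod 5) ((j+1) mod 5) \<and> \<not> near ((j+3) mod 5) j \<and> \<not> near ((j+4) mod 5) ((j+2) mod 5) \<and>
        \<not> near ((j+3) mod 5) ((j+1) mod 5)" using nearfacts[OF j] .
      have qx: "q x = j" and qy: "q y = (j+1) mod 5" using xy(3) unfolding j_def by auto
      have SK: "q s = j \<or> q s = (j+1) mod 5" if s: "s \<in> Sng" for s
        using near2[OF qlt[of s] j] Sidx[OF s xy(1)] Sidx[OF s xy(2)] s SngV qx qy by auto
      obtain c d where cd: "c \<in> V" "d \<in> V" "c \<noteq> d" "\<alpha> c = \<alpha> d" "\<alpha> c \<in> L"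
        "\<forall>v\<in>V. q v = j \<or> q v = (j+1) mod 5 \<longrightarrow> \<alpha> v \<noteq> \<alpha> c" "q c = (j+2) mod 5" "q d = (j+4) mod 5"
        using findpair[OF j SK] by blast
      define a0 where "a0 = \<alpha> c"
      have ax: "\<alpha> x \<noteq> a0" "\<alpha> y \<noteq> a0" using cd(6) xyV qx qy unfolding a0_def by auto
      have dist: "c \<noteq> x" "c \<noteq> y" "d \<noteq> y" "x \<noteq> y" using cd(7,8) qx qy c5[OF j] by auto
      have onlyA: "\<And>w. w \<in> V \<Longrightarrow> \<alpha> w = a0 \<Longrightarrow> w = c \<or> w = d"
        using three_same[OF a cd(1) cd(2)] cd(3,4) unfolding a0_def by metis
      let ?\<alpha>1 = "\<alpha>(c := \<alpha> x)"
      have xL: "\<alpha> x \<in> L" using col_in[OF a xyV(1)] .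
      have r1: "reach V E L \<alpha> ?\<alpha>1"
      proof (rule reach_upd[OF a cd(1) xL])
        fix w assume w: "w \<in> V" "{c, w} \<in> E"
        show "\<alpha> w \<noteq> \<alpha> x"
        proof
          assume "\<alpha> w = \<alpha> x"
          then have "w = x" using sng[OF xy(1) w(1)] by simp
          then show False using w qadj[OF cd(1) xyV(1) dist(1)] cd(7) qx nf by simp
        qed
      qed
      have c1: "col V E L ?\<alpha>1" using reach_col[OF r1 a] .
      let ?\<alpha>2 = "?\<alpha>1(y := a0)"
      have r2: "reach V E L ?\<alpha>1 ?\<alpha>2"
      proof (rule reach_upd[OF c1 xyV(2)])
        show "a0 \<in> L" using cd(5) unfolding a0_def .
        fix w assume w: "w \<in> V" "{y, w} \<in> E"
        show "?\<alpha>1 w \<noteq> a0"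
        proof
          assume h: "?\<alpha>1 w = a0"
          have "w \<noteq> c" using h ax by auto
          then have "\<alpha> w = a0" using h by simp
          then have "w = d" using onlyA[OF w(1)] \<open>w \<noteq> c\<close> by blast
          then show False using w qadj[OF xyV(2) cd(2) dist(3)[symmetric]] cd(8) qy nf by simp
        qed
      qed
      have c2: "col V E L ?\<alpha>2" using reach_col[OF r2 c1] .
      have v2: "?\<alpha>2 c = \<alpha> x" "?\<alpha>2 x = \<alpha> x" "?\<alpha>2 y = a0" using dist by auto
      have "inS V E L c x ?\<alpha>2" unfolding inS_def
      proof (intro conjI ballI impI)
        fix w assume w: "w \<in> V" "?\<alpha>2 w = ?\<alpha>2 c"
        show "w = c \<or> w = x"
        proof (cases "w = y \<or> w = c")
          case True then show ?thesis using w v2 ax by auto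
        next
          case False
          then have "\<alpha> w = \<alpha> x" using w v2 by auto
          then show ?thesis using sng[OF xy(1) w(1)] by simp
        qed
      qed (use c2 dist cd xyV v2 in auto)
      moreover have "\<alpha> y \<notin> ?\<alpha>2 ` V"
      proof
        assume "\<alpha> y \<in> ?\<alpha>2 ` V"
        then obtain w where w: "w \<in> V" "?\<alpha>2 w = \<alpha> y" by auto
        show False
        proof (cases "w = y")
          case True then show False using w v2 ax by auto
        next
          case F: False
          show False
          proof (cases "w = c")
            case True then show False using w F v2 sng[OF xy(2) xyV(1)] dist(4) by auto
          next
            case False then show False using w F sng[OF xy(2) w(1)] by auto
          qed
        qed
      qed
      moreover have "\<alpha> y \<in> L" using col_in[OF a xyV(2)] .
      ultimately have "good V E L ?\<alpha>2" unfolding good_def by blast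
      then show ?thesis using r1 r2 by (meson rtranclp_trans)
    next
      case False
      then have noadj: "\<And>x y. x \<in> Sng \<Longrightarrow> y \<in> Sng \<Longrightarrow> q y \<noteq> (q x + 1) mod 5" by blast
      have same: "\<And>x y. x \<in> Sng \<Longrightarrow> y \<in> Sng \<Longrightarrow> q x = q y"
        using sameidx Sidx noadj qlt SngV by (meson subsetD)
      obtain x x' where xx: "x \<in> Sng" "x' \<in> Sng" "x \<noteq> x'"
        using count2[OF a allU] unfolding Sng_def by blast
      define j where "j = q x"
      have xV: "x \<in> V" "x' \<in> V" using xx SngV by auto
      have j: "j < 5" using qlt[OF xV(1)] unfolding j_def .
      have nf: "near j ((j+1) mod 5) \<and> near ((j+4) mod 5) j \<and>
        \<not> near ((j+2) mod 5) j \<and> \<not> near ((j+1) mod 5) ((j+4) mod 5) \<and> \<not> near j ((j+3) mod 5) \<and>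
        \<not> near ((j+1) mod 5) ((j+3) mod 5) \<and> \<not> near ((j+2) mod 5) ((j+4) mod 5) \<and> \<not> near j ((j+2) mod 5) \<and>
        \<not> near ((j+4) mod 5) ((j+1) mod 5) \<and> \<not> near ((j+3) mod 5) j \<and> \<not> near ((j+4) mod 5) ((j+2) mod 5) \<and>
        \<not> near ((j+3) mod 5) ((j+1) mod 5)" using nearfacts[OF j] .
      have qx: "q x = j" "q x' = j" using same[OF xx(1) xx(2)] unfolding j_def by auto
      have SK: "q s = j \<or> q s = (j+1) mod 5" if s: "s \<in> Sng" for s using same[OF s xx(1)] qx by auto
      obtain c d where cd: "c \<in> V" "d \<in> V" "c \<noteq> d" "\<alpha> c = \<alpha> d" "\<alpha> c \<in> L"
        "\<forall>v\<in>V. q v = j \<or> q v = (j+1) mod 5 \<longrightarrow> \<alpha> v \<noteq> \<alpha> c" "q c = (j+2) mod 5" "q d = (j+4) mod 5"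
        using findpair[OF j SK] by blast
      define j4 where "j4 = (j + 4) mod 5"
      have j4: "j4 < 5" "(j4 + 1) mod 5 = j" "(j4 + 1 + 2) mod 5 = (j + 2) mod 5" "(j4 + 2) mod 5 = (j + 1) mod 5"
        "(j4 + 4) mod 5 = (j + 3) mod 5" unfolding j4_def using c5[OF j] by auto
      have SK2: "q s = j4 \<or> q s = (j4+1) mod 5" if s: "s \<in> Sng" for s using same[OF s xx(1)] qx j4(2) by auto
      obtain e f where ef: "e \<in> V" "f \<in> V" "e \<noteq> f" "\<alpha> e = \<alpha> f" "\<alpha> e \<in> L"
        "\<forall>v\<in>V. q v = j4 \<or> q v = (j4+1) mod 5 \<longrightarrow> \<alpha> v \<noteq> \<alpha> e" "q e = (j4+2) mod 5" "q f = (j4+4) mod 5"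
        using findpair[OF j4(1) SK2] by blast
      have qe: "q e = (j+1) mod 5" "q f = (j+3) mod 5" using ef(7,8) j4 by auto
      define a0 where "a0 = \<alpha> c"
      define a1 where "a1 = \<alpha> e"
      have K1: "\<alpha> x \<noteq> a0" "\<alpha> x' \<noteq> a0" using cd(6) xV qx unfolding a0_def by auto
      have K2: "\<alpha> x \<noteq> a1" "\<alpha> x' \<noteq> a1" "\<alpha> d \<noteq> a1" using ef(6) xV qx cd(2,8) j4(2) unfolding a1_def j4_def by auto
      have dist: "c \<noteq> x" "c \<noteq> x'" "c \<noteq> e" "e \<noteq> x" "e \<noteq> x'" "d \<noteq> e" "f \<noteq> x" "e \<noteq> c"
        using cd(7,8) qe qx c5[OF j] by auto
      have onlyA: "\<And>w. w \<in> V \<Longrightarrow> \<alpha> w = a0 \<Longrightarrow> w = c \<or> w = d"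
        using three_same[OF a cd(1) cd(2)] cd(3,4) unfolding a0_def by metis
      have onlyB: "\<And>w. w \<in> V \<Longrightarrow> \<alpha> w = a1 \<Longrightarrow> w = e \<or> w = f"
        using three_same[OF a ef(1) ef(2)] ef(3,4) unfolding a1_def by metis
      have x'L: "\<alpha> x' \<in> L" using col_in[OF a xV(2)] .
      let ?\<alpha>1 = "\<alpha>(c := \<alpha> x')"
      have r1: "reach V E L \<alpha> ?\<alpha>1"
      proof (rule reach_upd[OF a cd(1) x'L])
        fix w assume w: "w \<in> V" "{c, w} \<in> E"
        show "\<alpha> w \<noteq> \<alpha> x'"
        proof
          assume "\<alpha> w = \<alpha> x'"
          then have "w = x'" using sng[OF xx(2) w(1)] by simp
          then show False using w qadj[OF cd(1) xV(2) dist(2)] cd(7) qx nf by simp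
        qed
      qed
      have c1: "col V E L ?\<alpha>1" using reach_col[OF r1 a] .
      let ?\<alpha>2 = "?\<alpha>1(e := a0)"
      have r2: "reach V E L ?\<alpha>1 ?\<alpha>2"
      proof (rule reach_upd[OF c1 ef(1)])
        show "a0 \<in> L" using cd(5) unfolding a0_def .
        fix w assume w: "w \<in> V" "{e, w} \<in> E"
        show "?\<alpha>1 w \<noteq> a0"
        proof
          assume h: "?\<alpha>1 w = a0"
          have "w \<noteq> c" using h K1 by auto
          then have "\<alpha> w = a0" using h by simp
          then have "w = d" using onlyA[OF w(1)] \<open>w \<noteq> c\<close> by blast
          then show False using w qadj[OF ef(1) cd(2) dist(6)[symmetric]] cd(8) qe nf by simp
        qed
      qed
      have c2: "col V E L ?\<alpha>2" using reach_col[OF r2 c1] .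
      let ?\<alpha>3 = "?\<alpha>2(x := a1)"
      have a0a1: "a0 \<noteq> a1" using K2(3) cd(4) unfolding a0_def by simp
      have r3: "reach V E L ?\<alpha>2 ?\<alpha>3"
      proof (rule reach_upd[OF c2 xV(1)])
        show "a1 \<in> L" using ef(5) unfolding a1_def .
        fix w assume w: "w \<in> V" "{x, w} \<in> E"
        show "?\<alpha>2 w \<noteq> a1"
        proof
          assume h: "?\<alpha>2 w = a1"
          have "w \<noteq> e" using h a0a1 by auto
          moreover have "w \<noteq> c" using h K2 \<open>w \<noteq> e\<close> by auto
          ultimately have "\<alpha> w = a1" using h by simp
          then have "w = f" using onlyB[OF w(1)] \<open>w \<noteq> e\<close> by blast
          then show False using w qadj[OF xV(1) ef(2) dist(7)[symmetric]] qe qx nf by simp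
        qed
      qed
      have c3: "col V E L ?\<alpha>3" using reach_col[OF r3 c2] .
      have v3: "?\<alpha>3 c = \<alpha> x'" "?\<alpha>3 x' = \<alpha> x'" "?\<alpha>3 e = a0" "?\<alpha>3 x = a1" using dist xx(3) by auto
      have "inS V E L c x' ?\<alpha>3" unfolding inS_def
      proof (intro conjI ballI impI)
        fix w assume w: "w \<in> V" "?\<alpha>3 w = ?\<alpha>3 c"
        show "w = c \<or> w = x'"
        proof (cases "w = x \<or> w = e \<or> w = c")
          case True then show ?thesis using w v3 K1 K2 by auto
        next
          case False
          then have "\<alpha> w = \<alpha> x'" using w v3 by auto
          then show ?thesis using sng[OF xx(2) w(1)] by simp
        qed
      qed (use c3 dist cd xV v3 in auto)
      moreover have "\<alpha> x \<notin> ?\<alpha>3 ` V"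
      proof
        assume "\<alpha> x \<in> ?\<alpha>3 ` V"
        then obtain w where w: "w \<in> V" "?\<alpha>3 w = \<alpha> x" by auto
        show False
        proof (cases "w = x \<or> w = e")
          case True then show False using w v3 K1 K2 by auto
        next
          case F: False
          show False
          proof (cases "w = c")
            case True then show False using w F v3 sng[OF xx(1) xV(2)] xx(3) by auto
          next
            case False then show False using w F sng[OF xx(1) w(1)] by auto
          qed
        qed
      qed
      moreover have "\<alpha> x \<in> L" using col_in[OF a xV(1)] .
      ultimately have "good V E L ?\<alpha>3" unfolding good_def by blast
      then show ?thesis using r1 r2 r3 by (meson rtranclp_trans)
    qed
  qed
qed

end

lemma blowup_conn:
  assumes fin: "finite V" and lp: "loopless E" and fL: "finite L"
    and cL: "chromatic_number V E + 1 \<le> card L" and bl: "blowup V E"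
    and IH: "\<And>R L'. R \<subseteq> V \<Longrightarrow> R \<noteq> V \<Longrightarrow> finite L' \<Longrightarrow> chromatic_number R E + 1 \<le> card L' \<Longrightarrow> conn R E L'"
  shows "conn V E L"
  unfolding conn_def
proof (intro allI impI)
  fix \<alpha> \<beta> assume a: "col V E L \<alpha>" and b: "col V E L \<beta>"
  obtain q where q: "\<forall>v\<in>V. q v < 5" "\<exists>x\<in>V. \<exists>y\<in>V. x \<noteq> y \<and> {x, y} \<notin> E"
    "\<forall>x\<in>V. \<forall>y\<in>V. x \<noteq> y \<longrightarrow> ({x, y} \<in> E) = near (q x) (q y)"
    using bl unfolding blowup_def by blast
  have qlt: "\<And>v. v \<in> V \<Longrightarrow> q v < 5" using q(1) by blast
  have qadj: "\<And>x y. x \<in> V \<Longrightarrow> y \<in> V \<Longrightarrow> x \<noteq> y \<Longrightarrow> ({x, y} \<in> E) = near (q x) (q y)" using q(3) by blast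
  obtain \<sigma>1 where s1: "reach V E L \<alpha> \<sigma>1" "good V E L \<sigma>1"
    using reach_good[OF fin lp fL cL qlt qadj q(2) a] by blast
  obtain \<sigma>2 where s2: "reach V E L \<beta> \<sigma>2" "good V E L \<sigma>2"
    using reach_good[OF fin lp fL cL qlt qadj q(2) b] by blast
  have "reach V E L \<sigma>1 \<sigma>2" using good_conn[OF fin lp fL IH s1(2) s2(2)] by blast
  moreover have "reach V E L \<sigma>2 \<beta>" using reach_sym[OF s2(1)] .
  ultimately show "reach V E L \<alpha> \<beta>" using s1(1) by (meson rtranclp_trans)
qed

lemma small_conn:
  assumes "card V < 2" "finite V"
  shows "conn V E L"
  unfolding conn_def
proof (intro allI impI)
  fix \<alpha> \<beta> assume a: "col V E L \<alpha>" and b: "col V E L \<beta>"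
  obtain u where u: "V \<subseteq> {u}"
  proof (cases "V = {}")
    case True then show ?thesis using that by auto
  next
    case False
    then obtain x where "x \<in> V" by auto
    moreover have "card V \<le> 1" using assms by simp
    ultimately have "V = {x}" using assms(2) by (metis card_le_Suc0_iff_eq One_nat_def singletonI subsetI subset_antisym singletonD)
    then show ?thesis using that by auto
  qed
  have "\<forall>v. v \<noteq> u \<longrightarrow> \<alpha> v = \<beta> v"
  proof (intro allI impI)
    fix v assume "v \<noteq> u"
    then have "v \<notin> V" using u by auto
    then show "\<alpha> v = \<beta> v" using col_ext[OF a] col_ext[OF b] by simp
  qed
  then have "step V E L \<alpha> \<beta>" unfolding step_def using a b by blast
  then show "reach V E L \<alpha> \<beta>" by auto
qed

lemma main_conn:
  "finite V \<Longrightarrow> loopless E \<Longrightarrow> P5_C4_free V E \<Longrightarrow> finite L \<Longrightarrow> chromatic_number V E + 1 \<le> card L \<Longrightarrow> conn V E L"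
proof (induction "card V" arbitrary: V L rule: less_induct)
  case less
  note fin = less.prems(1) and lp = less.prems(2) and fr = less.prems(3) and fL = less.prems(4) and cL = less.prems(5)
  have IH: "conn R E L'" if "R \<subseteq> V" "R \<noteq> V" "finite L'" "chromatic_number R E + 1 \<le> card L'" for R L'
  proof -
    have "card R < card V" using psubset_card_mono[OF fin] that(1,2) by blast
    moreover have "finite R" using that(1) fin finite_subset by blast
    moreover have "P5_C4_free R E" using free_mono[OF fr that(1)] .
    ultimately show ?thesis using less.hyps[of R] lp that(3,4) by blast
  qed
  show ?case
  proof (cases "card V < 2")
    case True then show ?thesis using small_conn fin by blast
  next
    case False
    then have "2 \<le> card V" by simp
    then have "(\<exists>B Y. split_ok V E B Y) \<or> blowup V E" using graph_structure[OF fin lp fr] by blast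
    then show ?thesis
    proof
      assume "\<exists>B Y. split_ok V E B Y"
      then obtain B Y where sp: "split_ok V E B Y" by blast
      have BV: "B \<subseteq> V" "B \<noteq> V" "B \<noteq> {}" using sp unfolding split_ok_def by auto
      show ?thesis
      proof (rule split_conn[OF fin lp sp _ _ fL cL])
        show "conn B E L'" if "finite L'" "chromatic_number B E + 1 \<le> card L'" for L'
          using IH[OF BV(1,2) that] .
        show "conn (V - B) E L'" if "finite L'" "chromatic_number (V - B) E + 1 \<le> card L'" for L'
        proof (rule IH[OF _ _ that])
          show "V - B \<subseteq> V" by auto
          show "V - B \<noteq> V" using BV by auto
        qed
      qed
    next
      assume "blowup V E"
      then show ?thesis using blowup_conn[OF fin lp fL cL _ IH] by blast
    qed
  qed
qed

lemma reach_list: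
  assumes "reach V E L \<alpha> \<beta>"
  shows "\<exists>xs. xs \<noteq> [] \<and> hd xs = \<alpha> \<and> last xs = \<beta> \<and> set xs \<subseteq> Collect (col V E L) \<union> {\<alpha>} \<and>
             (\<forall>i < length xs - 1. recolour_adj V (xs ! i) (xs ! Suc i))"
  using assms
proof (induction rule: rtranclp_induct)
  case base
  show ?case by (intro exI[of _ "[\<alpha>]"]) auto
next
  case (step y z)
  then obtain xs where xs: "xs \<noteq> []" "hd xs = \<alpha>" "last xs = y" "set xs \<subseteq> Collect (col V E L) \<union> {\<alpha>}"
    "\<forall>i < length xs - 1. recolour_adj V (xs ! i) (xs ! Suc i)" by blast
  have st: "col V E L y" "col V E L z" and dif: "\<exists>u. \<forall>v. v \<noteq> u \<longrightarrow> y v = z v"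
    using step(2) unfolding step_def by auto
  show ?case
  proof (cases "y = z")
    case True then show ?thesis using xs by blast
  next
    case False
    obtain u where u: "\<forall>v. v \<noteq> u \<longrightarrow> y v = z v" using dif by blast
    obtain w where w: "y w \<noteq> z w" using False by (meson ext)
    have "w = u" using u w by blast
    have wV: "w \<in> V" using w col_ext[OF st(1)] col_ext[OF st(2)] by metis
    have "{v\<in>V. y v \<noteq> z v} = {u}" using u w wV \<open>w = u\<close> by auto
    then have ra: "recolour_adj V y z" unfolding recolour_adj_def by simp
    let ?ys = "xs @ [z]"
    have "\<forall>i < length ?ys - 1. recolour_adj V (?ys ! i) (?ys ! Suc i)"
    proof (intro allI impI)
      fix i assume i: "i < length ?ys - 1"
      show "recolour_adj V (?ys ! i) (?ys ! Suc i)"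
      proof (cases "i < length xs - 1")
        case True
        then have "Suc i < length xs" "i < length xs" by auto
        then show ?thesis using xs(5) True by (simp add: nth_append)
      next
        case False
        then have "i = length xs - 1" using i by simp
        moreover have "xs ! (length xs - 1) = y" using xs(1,3) by (simp add: last_conv_nth)
        ultimately show ?thesis using ra xs(1) by (simp add: nth_append)
      qed
    qed
    moreover have "set ?ys \<subseteq> Collect (col V E L) \<union> {\<alpha>}" using xs(4) st(2) by auto
    ultimately show ?thesis using xs(1,2) by (intro exI[of _ ?ys]) auto
  qed
qed

theorem theorem8:
  fixes V :: "'a set" and E :: "'a set set" and l :: nat
  assumes "simple_graph V E"
    and "P5_C4_free V E"
    and "l \<ge> chromatic_number V E + 1"
  shows "reconf_connected V E l"
proof -
  have fin: "finite V" using assms(1) unfolding simple_graph_def by auto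
  have lp: "loopless E" unfolding loopless_def
  proof
    fix v show "{v} \<notin> E" using assms(1) unfolding simple_graph_def by fastforce
  qed
  have c: "conn V E {1..l}" using main_conn[OF fin lp assms(2)] assms(3) by simp
  show ?thesis unfolding reconf_connected_def
  proof (intro ballI)
    fix \<alpha> \<beta> assume a: "\<alpha> \<in> colourings V E l" and b: "\<beta> \<in> colourings V E l"
    then have "col V E {1..l} \<alpha>" "col V E {1..l} \<beta>" unfolding colourings_col by auto
    then have "reach V E {1..l} \<alpha> \<beta>" using c unfolding conn_def by blast
    then obtain xs where xs: "xs \<noteq> []" "hd xs = \<alpha>" "last xs = \<beta>" "set xs \<subseteq> Collect (col V E {1..l}) \<union> {\<alpha>}"
      "\<forall>i < length xs - 1. recolour_adj V (xs ! i) (xs ! Suc i)" using reach_list by blast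
    have "set xs \<subseteq> colourings V E l" using xs(4) a unfolding colourings_col by auto
    then show "\<exists>xs. xs \<noteq> [] \<and> hd xs = \<alpha> \<and> last xs = \<beta> \<and> set xs \<subseteq> colourings V E l \<and>
             (\<forall>i < length xs - 1. recolour_adj V (xs ! i) (xs ! Suc i))" using xs by blast
  qed
qed

end
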